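(* Let $H_1,H_2$ be Hilbert spaces, let $C\in\mathcal{B}(H_2,H_1)$ be a contraction, and let $T=\begin{bmatrix}I_{H_1} & C\\ C^* & I_{H_2}\end{bmatrix}$ on $H_1\oplus H_2$. Then $T\in\mathcal{AM}(H_1\oplus H_2)$ if and only if $C$ has finite rank.
   Context: Throughout, Hilbert spaces are complex, separable and infinite dimensional; $\mathcal{B}(H_1,H_2)$ denotes bounded linear operators. For $S\in\mathcal{B}(H_1,H_2)$ the minimum modulus is $m(S)=\inf\{\|Sx\|:\|x\|=1\}$; $S$ is minimum attaining if $\|Sx\|=m(S)$ for some unit vector $x$. $S$ is absolutely minimum attaining, written $S\in\mathcal{AM}(H_1,H_2)$, if for every nonzero closed subspace $M\subseteq H_1$ the restriction $S|_M$ is minimum attaining. *)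

theory Defs
  imports "HOL-Analysis.Analysis"
begin

class complex_vector = real_vector +
  fixes scaleC :: "complex \<Rightarrow> 'a \<Rightarrow> 'a"
  assumes scaleC_add_right: "scaleC a (x + y) = scaleC a x + scaleC a y"
    and scaleC_add_left: "scaleC (a + b) x = scaleC a x + scaleC b x"
    and scaleC_scaleC: "scaleC a (scaleC b x) = scaleC (a * b) x"
    and scaleC_one: "scaleC 1 x = x"
    and scaleR_scaleC: "scaleR r x = scaleC (complex_of_real r) x"

class complex_normed_vector = complex_vector + real_normed_vector +
  assumes norm_scaleC: "norm (scaleC a x) = cmod a * norm x"

class complex_inner = complex_normed_vector +
  fixes cinner :: "'a \<Rightarrow> 'a \<Rightarrow> complex"
  assumes cinner_commute: "cinner x y = cnj (cinner y x)"
    and cinner_add_left: "cinner (x + y) z = cinner x z + cinner y z"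
    and cinner_scaleC_left: "cinner (scaleC r x) y = cnj r * cinner x y"
    and cinner_pos: "Im (cinner x x) = 0 \<and> Re (cinner x x) \<ge> 0"
    and cinner_eq_zero_iff: "cinner x x = 0 \<longleftrightarrow> x = 0"
    and norm_eq_sqrt_cinner: "norm x = sqrt (Re (cinner x x))"

class chilbert_space = complex_inner + complete_space

text \<open>The direct sum \<open>H1 \<oplus> H2\<close> is the product type; its norm (from HOL-Analysis)
  is \<open>sqrt (norm x ^ 2 + norm y ^ 2)\<close>, the Hilbert direct-sum norm.\<close>
instantiation prod :: (complex_vector, complex_vector) complex_vector
begin
definition scaleC_prod_def: "scaleC a p = (scaleC a (fst p), scaleC a (snd p))"
instance
  by standard (auto simp: scaleC_prod_def scaleC_add_right scaleC_add_left
      scaleC_scaleC scaleC_one scaleR_scaleC scaleR_prod_def)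
end

definition csubspace :: "'a::complex_vector set \<Rightarrow> bool" where
  "csubspace M \<longleftrightarrow> 0 \<in> M \<and> (\<forall>x\<in>M. \<forall>y\<in>M. x + y \<in> M) \<and> (\<forall>c. \<forall>x\<in>M. scaleC c x \<in> M)"

definition closed_csubspace :: "'a::{complex_vector, topological_space} set \<Rightarrow> bool" where
  "closed_csubspace M \<longleftrightarrow> csubspace M \<and> closed M"

definition cspan :: "'a::complex_vector set \<Rightarrow> 'a set" where
  "cspan S = {sum (\<lambda>v. scaleC (c v) v) F | F c. finite F \<and> F \<subseteq> S}"

definition clinear :: "('a::complex_vector \<Rightarrow> 'b::complex_vector) \<Rightarrow> bool" where
  "clinear f \<longleftrightarrow> (\<forall>x y. f (x + y) = f x + f y) \<and> (\<forall>c x. f (scaleC c x) = scaleC c (f x))"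

definition bounded_clinear :: "('a::complex_normed_vector \<Rightarrow> 'b::complex_normed_vector) \<Rightarrow> bool" where
  "bounded_clinear f \<longleftrightarrow> clinear f \<and> (\<exists>K. \<forall>x. norm (f x) \<le> norm x * K)"

definition contraction :: "('a::complex_normed_vector \<Rightarrow> 'b::complex_normed_vector) \<Rightarrow> bool" where
  "contraction f \<longleftrightarrow> (\<forall>x. norm (f x) \<le> norm x)"

definition cadjoint :: "('a::complex_inner \<Rightarrow> 'b::complex_inner) \<Rightarrow> 'b \<Rightarrow> 'a" where
  "cadjoint C = (\<lambda>y. THE z. \<forall>x. cinner z x = cinner y (C x))"

definition finite_rank :: "('a \<Rightarrow> 'b::complex_vector) \<Rightarrow> bool" where
  "finite_rank C \<longleftrightarrow> (\<exists>F. finite F \<and> range C \<subseteq> cspan F)"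

definition separable_space :: "'a::topological_space itself \<Rightarrow> bool" where
  "separable_space _ \<longleftrightarrow> (\<exists>D::'a set. countable D \<and> closure D = UNIV)"

definition infinite_dimensional :: "'a::complex_vector itself \<Rightarrow> bool" where
  "infinite_dimensional _ \<longleftrightarrow> \<not> (\<exists>F::'a set. finite F \<and> cspan F = UNIV)"

definition min_modulus_on :: "'a::real_normed_vector set \<Rightarrow> ('a \<Rightarrow> 'b::real_normed_vector) \<Rightarrow> real" where
  "min_modulus_on M S = Inf {norm (S x) | x. x \<in> M \<and> norm x = 1}"

definition min_attaining_on :: "'a::real_normed_vector set \<Rightarrow> ('a \<Rightarrow> 'b::real_normed_vector) \<Rightarrow> bool" where
  "min_attaining_on M S \<longleftrightarrow> (\<exists>x\<in>M. norm x = 1 \<and> norm (S x) = min_modulus_on M S)"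

definition abs_min_attaining :: "('a::{complex_vector, real_normed_vector} \<Rightarrow> 'b::real_normed_vector) \<Rightarrow> bool" where
  "abs_min_attaining S \<longleftrightarrow>
     (\<forall>M. closed_csubspace M \<and> M \<noteq> {0} \<longrightarrow> min_attaining_on M S)"

end

theory Submission
  imports Defs
begin
lemma cmodule: "module (scaleC :: complex \<Rightarrow> 'a \<Rightarrow> 'a::complex_vector)"
  apply unfold_locales
  apply (rule scaleC_add_right)
  apply (rule scaleC_add_left)
  apply (rule scaleC_scaleC)
  apply (rule scaleC_one)
  done

lemma cvs: "vector_space (scaleC :: complex \<Rightarrow> 'a \<Rightarrow> 'a::complex_vector)"
  apply unfold_locales
  apply (rule scaleC_add_right)
  apply (rule scaleC_add_left)
  apply (rule scaleC_scaleC)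
  apply (rule scaleC_one)
  done

lemmas scaleC_zero_right[simp] = module.scale_zero_right[OF cmodule]
lemmas scaleC_zero_left[simp] = module.scale_zero_left[OF cmodule]
lemmas scaleC_minus_right = module.scale_minus_right[OF cmodule]
lemmas scaleC_minus_left = module.scale_minus_left[OF cmodule]
lemmas scaleC_diff_right = module.scale_right_diff_distrib[OF cmodule]
lemmas scaleC_diff_left = module.scale_left_diff_distrib[OF cmodule]
lemmas scaleC_sum_right = module.scale_sum_right[OF cmodule]
lemmas scaleC_sum_left = module.scale_sum_left[OF cmodule]

lemma cnj_cinner: "cnj (cinner x y) = cinner y x"
  using cinner_commute[of y x] by simp
lemma cinner_add_right: "cinner x (y + z) = cinner x y + cinner x z"
proof -
  have "cinner x (y + z) = cnj (cinner (y + z) x)" by (rule cinner_commute)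
  also have "\<dots> = cnj (cinner y x) + cnj (cinner z x)" by (simp add: cinner_add_left)
  finally show ?thesis by (simp add: cnj_cinner)
qed
lemma cinner_scaleC_right: "cinner x (scaleC c y) = c * cinner x y"
proof -
  have "cinner x (scaleC c y) = cnj (cinner (scaleC c y) x)" by (rule cinner_commute)
  also have "\<dots> = c * cnj (cinner y x)" by (simp add: cinner_scaleC_left)
  finally show ?thesis by (simp add: cnj_cinner)
qed
lemma cinner_zero_left[simp]: "cinner 0 x = 0"
  using cinner_scaleC_left[of 0 x x] by simp
lemma cinner_zero_right[simp]: "cinner x 0 = 0"
  using cinner_scaleC_right[of x 0 x] by simp
lemma cinner_minus_left: "cinner (- x) y = - cinner x y"
  using cinner_scaleC_left[of "-1" x y] by (simp add: scaleC_minus_left scaleC_one)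
lemma cinner_minus_right: "cinner x (- y) = - cinner x y"
  using cinner_scaleC_right[of x "-1" y] by (simp add: scaleC_minus_left scaleC_one)
lemma cinner_diff_left: "cinner (x - y) z = cinner x z - cinner y z"
  by (simp only: diff_conv_add_uminus cinner_add_left cinner_minus_left)
lemma cinner_diff_right: "cinner x (y - z) = cinner x y - cinner x z"
  by (simp only: diff_conv_add_uminus cinner_add_right cinner_minus_right)
lemma cinner_sum_left: "cinner (sum f A) y = (\<Sum>a\<in>A. cinner (f a) y)"
  by (induction A rule: infinite_finite_induct) (auto simp: cinner_add_left)
lemma cinner_sum_right: "cinner y (sum f A) = (\<Sum>a\<in>A. cinner y (f a))"
  by (induction A rule: infinite_finite_induct) (auto simp: cinner_add_right)
lemma cinner_scaleR_left: "cinner (scaleR r x) y = of_real r * cinner x y"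
  by (simp add: scaleR_scaleC cinner_scaleC_left)
lemma cinner_scaleR_right: "cinner x (scaleR r y) = of_real r * cinner x y"
  by (simp add: scaleR_scaleC cinner_scaleC_right)

lemma norm_sq_cinner: "(norm x)^2 = Re (cinner x x)"
  using cinner_pos[of x] by (simp add: norm_eq_sqrt_cinner)
lemma cinner_self: "cinner x x = complex_of_real ((norm x)^2)"
  using cinner_pos[of x] by (simp add: norm_sq_cinner complex_eq_iff)
lemma cinner_self_Re: "Re (cinner x x) = (norm x)^2"
  by (simp add: norm_sq_cinner)


lemma Re_cinner_commute: "Re (cinner x y) = Re (cinner y x)"
  using cinner_commute[of x y] by simp

lemma norm_add_sq: "(norm (x + y))^2 = (norm x)^2 + (norm y)^2 + 2 * Re (cinner x y)"
proof -
  have "cinner (x+y) (x+y) = cinner x x + cinner y y + (cinner x y + cinner y x)"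
    unfolding cinner_add_left cinner_add_right by (simp only: ac_simps)
  then have "Re (cinner (x+y) (x+y)) = Re (cinner x x) + Re (cinner y y) + (Re (cinner x y) + Re (cinner y x))"
    by simp
  then show ?thesis unfolding cinner_self_Re using Re_cinner_commute[of y x] by simp
qed

lemma norm_diff_sq: "(norm (x - y))^2 = (norm x)^2 + (norm y)^2 - 2 * Re (cinner x y)"
  using norm_add_sq[of x "-y"] by (simp add: cinner_minus_right)

lemma pythagoras: "cinner x y = 0 \<Longrightarrow> (norm (x + y))^2 = (norm x)^2 + (norm y)^2"
  by (simp add: norm_add_sq)

lemma cauchy_schwarz: "cmod (cinner x y) \<le> norm x * norm y"
proof (cases "y = 0")
  case True then show ?thesis by simp
next
  case False
  then have ny: "norm y > 0" by simp
  define a where "a = cinner y x"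
  define n where "n = (norm y)^2"
  have n0: "n > 0" using ny by (simp add: n_def)
  define s where "s = a / complex_of_real n"
  have aa: "a * cnj a = complex_of_real ((cmod a)^2)"
    by (rule complex_norm_square[symmetric])
  have cxy: "cinner x y = cnj a" by (simp add: a_def cnj_cinner)
  have cyy: "cinner y y = complex_of_real n" by (simp add: n_def cinner_self)
  have e1: "s * cinner x y = complex_of_real ((cmod a)^2 / n)"
    unfolding cxy s_def using aa by simp
  have e2: "cnj s * cinner y x = complex_of_real ((cmod a)^2 / n)"
    unfolding a_def[symmetric] s_def using aa by (simp add: mult.commute)
  have e3: "cnj s * s * cinner y y = complex_of_real ((cmod a)^2 / n)"
  proof -
    have "cnj s * s * cinner y y = (a * cnj a) / complex_of_real n"
      unfolding cyy s_def using n0 by (simp add: field_simps power2_eq_square)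
    then show ?thesis using aa by simp
  qed
  have "0 \<le> Re (cinner (x - scaleC s y) (x - scaleC s y))"
    using cinner_pos by blast
  also have "cinner (x - scaleC s y) (x - scaleC s y)
      = cinner x x - s * cinner x y - cnj s * cinner y x + cnj s * s * cinner y y"
    by (simp add: cinner_diff_left cinner_diff_right cinner_scaleC_left cinner_scaleC_right algebra_simps)
  also have "\<dots> = complex_of_real ((norm x)^2) - complex_of_real ((cmod a)^2 / n)"
    unfolding e1 e2 e3 by (simp add: cinner_self)
  finally have "(cmod a)^2 / n \<le> (norm x)^2" by simp
  then have "(cmod a)^2 \<le> (norm x * norm y)^2"
  proof -
    have "(cmod a)^2 \<le> (norm x)^2 * n" using n0 \<open>(cmod a)^2 / n \<le> (norm x)^2\<close>
      by (simp add: pos_divide_le_eq)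
    then show ?thesis by (simp add: n_def power_mult_distrib)
  qed
  then have "cmod a \<le> norm x * norm y"
    by (rule power2_le_imp_le) simp
  moreover have "cmod (cinner x y) = cmod a" unfolding a_def cinner_commute[of x y] by simp
  ultimately show ?thesis by simp
qed

lemma bb_cinner: "bounded_bilinear (cinner :: 'a::complex_inner \<Rightarrow> 'a \<Rightarrow> complex)"
proof
  fix a a' b b' :: 'a and r :: real
  show "cinner (a + a') b = cinner a b + cinner a' b" by (rule cinner_add_left)
  show "cinner a (b + b') = cinner a b + cinner a b'" by (rule cinner_add_right)
  show "cinner (scaleR r a) b = scaleR r (cinner a b)"
    by (simp add: cinner_scaleR_left scaleR_conv_of_real)
  show "cinner a (scaleR r b) = scaleR r (cinner a b)"
    by (simp add: cinner_scaleR_right scaleR_conv_of_real)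
next
  show "\<exists>K. \<forall>a b::'a. norm (cinner a b) \<le> norm a * norm b * K"
    by (rule exI[of _ 1]) (simp add: cauchy_schwarz)
qed

lemmas tendsto_cinner[tendsto_intros] = bounded_bilinear.tendsto[OF bb_cinner]
lemmas continuous_on_cinner[continuous_intros] = bounded_bilinear.continuous_on[OF bb_cinner]
lemmas continuous_cinner[continuous_intros] = bounded_bilinear.continuous[OF bb_cinner]

instance prod :: (complex_normed_vector, complex_normed_vector) complex_normed_vector
proof
  fix a :: complex and x :: "'a \<times> 'b"
  show "norm (scaleC a x) = cmod a * norm x"
    by (simp add: scaleC_prod_def norm_prod_def norm_scaleC power_mult_distrib
        distrib_left[symmetric] real_sqrt_mult)
qed

instantiation prod :: (complex_inner, complex_inner) complex_inner
begin
definition cinner_prod_def: "cinner x y = cinner (fst x) (fst y) + cinner (snd x) (snd y)"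
instance
proof
  fix x y z :: "'a \<times> 'b" and r :: complex
  show "cinner x y = cnj (cinner y x)"
    unfolding cinner_prod_def by (simp add: cnj_cinner)
  show "cinner (x + y) z = cinner x z + cinner y z"
    unfolding cinner_prod_def by (simp add: cinner_add_left)
  show "cinner (scaleC r x) y = cnj r * cinner x y"
    unfolding cinner_prod_def by (simp add: cinner_scaleC_left scaleC_prod_def distrib_left)
  show "Im (cinner x x) = 0 \<and> 0 \<le> Re (cinner x x)"
    unfolding cinner_prod_def by (simp add: cinner_self)
  show "(cinner x x = 0) = (x = 0)"
  proof -
    have "cinner x x = complex_of_real ((norm (fst x))^2 + (norm (snd x))^2)"
      unfolding cinner_prod_def by (simp add: cinner_self)
    moreover have "((norm (fst x))^2 + (norm (snd x))^2 = 0) = (x = 0)"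
      by (simp add: prod_eq_iff add_nonneg_eq_0_iff)
    ultimately show ?thesis by (metis of_real_eq_0_iff)
  qed
  show "norm x = sqrt (Re (cinner x x))"
    unfolding cinner_prod_def by (simp add: cinner_self norm_prod_def)
qed
end

instance prod :: (chilbert_space, chilbert_space) chilbert_space ..

lemma cinner_Pair: "cinner (a, b) (c, d) = cinner a c + cinner b d"
  by (simp add: cinner_prod_def)

lemma cspan_eq: "cspan S = module.span scaleC S"
  unfolding cspan_def module.span_explicit[OF cmodule] by blast

lemma csubspace_eq: "csubspace S = module.subspace scaleC S"
  unfolding csubspace_def module.subspace_def[OF cmodule] by blast

lemma cspan_superset: "S \<subseteq> cspan S"
  unfolding cspan_eq by (rule module.span_superset[OF cmodule])
lemma cspan_base: "a \<in> S \<Longrightarrow> a \<in> cspan S"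
  using cspan_superset by blast
lemma cspan_zero: "0 \<in> cspan S"
  unfolding cspan_eq by (rule module.span_zero[OF cmodule])
lemma cspan_add: "x \<in> cspan S \<Longrightarrow> y \<in> cspan S \<Longrightarrow> x + y \<in> cspan S"
  unfolding cspan_eq by (rule module.span_add[OF cmodule])
lemma cspan_diff: "x \<in> cspan S \<Longrightarrow> y \<in> cspan S \<Longrightarrow> x - y \<in> cspan S"
  unfolding cspan_eq by (rule module.span_diff[OF cmodule])
lemma cspan_scale: "x \<in> cspan S \<Longrightarrow> scaleC c x \<in> cspan S"
  unfolding cspan_eq by (rule module.span_scale[OF cmodule])
lemma cspan_sum: "(\<And>x. x \<in> A \<Longrightarrow> f x \<in> cspan S) \<Longrightarrow> sum f A \<in> cspan S"
  unfolding cspan_eq by (rule module.span_sum[OF cmodule])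
lemma cspan_mono: "A \<subseteq> B \<Longrightarrow> cspan A \<subseteq> cspan B"
  unfolding cspan_eq by (rule module.span_mono[OF cmodule])
lemma cspan_span: "cspan (cspan A) = cspan A"
  unfolding cspan_eq by (rule module.span_span[OF cmodule])
lemma cspan_minimal: "S \<subseteq> T \<Longrightarrow> csubspace T \<Longrightarrow> cspan S \<subseteq> T"
  unfolding cspan_eq csubspace_eq by (rule module.span_minimal[OF cmodule])
lemma csubspace_cspan: "csubspace (cspan S)"
  unfolding cspan_eq csubspace_eq by (rule module.subspace_span[OF cmodule])

lemma cspan_subset_trans: "A \<subseteq> cspan B \<Longrightarrow> cspan A \<subseteq> cspan B"
  by (metis cspan_mono cspan_span)

lemma orth_cspan:
  assumes "\<And>g. g \<in> G \<Longrightarrow> cinner g y = 0" and "v \<in> cspan G"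
  shows "cinner v y = 0"
proof -
  from assms(2) obtain F c where v: "v = sum (\<lambda>v. scaleC (c v) v) F" and "finite F" "F \<subseteq> G"
    unfolding cspan_def by blast
  then show ?thesis
    using assms(1) by (auto simp: cinner_sum_left cinner_scaleC_left intro!: sum.neutral)
qed

definition orthonormal :: "'a::complex_inner set \<Rightarrow> bool" where
  "orthonormal E \<longleftrightarrow> (\<forall>e\<in>E. norm e = 1) \<and> (\<forall>e\<in>E. \<forall>f\<in>E. e \<noteq> f \<longrightarrow> cinner e f = 0)"

definition proj :: "'a::complex_inner set \<Rightarrow> 'a \<Rightarrow> 'a" where
  "proj E x = (\<Sum>e\<in>E. scaleC (cinner e x) e)"

lemma cinner_self_one: "norm e = 1 \<Longrightarrow> cinner e e = 1"
  by (simp add: cinner_self)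

lemma orthonormal_sum_cinner:
  assumes "finite E" "orthonormal E" "e \<in> E"
  shows "cinner e (\<Sum>f\<in>E. scaleC (c f) f) = c e"
proof -
  have "cinner e (\<Sum>f\<in>E. scaleC (c f) f) = (\<Sum>f\<in>E. c f * cinner e f)"
    by (simp add: cinner_sum_right cinner_scaleC_right)
  also have "\<dots> = c e * cinner e e"
  proof -
    have "(\<Sum>f\<in>E. c f * cinner e f) = c e * cinner e e + (\<Sum>f\<in>E-{e}. c f * cinner e f)"
      using assms by (simp add: sum.remove)
    moreover have "(\<Sum>f\<in>E-{e}. c f * cinner e f) = 0"
      using assms(2,3) unfolding orthonormal_def by (intro sum.neutral) auto
    ultimately show ?thesis by simp
  qed
  also have "\<dots> = c e" using assms by (simp add: orthonormal_def cinner_self_one)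
  finally show ?thesis .
qed

lemma cinner_proj:
  assumes "finite E" "orthonormal E" "e \<in> E"
  shows "cinner e (proj E x) = cinner e x"
  unfolding proj_def using orthonormal_sum_cinner[OF assms] .

lemma cinner_diff_proj:
  assumes "finite E" "orthonormal E" "e \<in> E"
  shows "cinner e (x - proj E x) = 0"
  using cinner_proj[OF assms] by (simp add: cinner_diff_right)

lemma proj_in_cspan: "proj E x \<in> cspan E"
  unfolding proj_def by (intro cspan_sum cspan_scale cspan_base)

lemma diff_proj_orth_cspan:
  assumes "finite E" "orthonormal E" "v \<in> cspan E"
  shows "cinner v (x - proj E x) = 0"
  using orth_cspan[of E "x - proj E x" v] cinner_diff_proj[OF assms(1,2)] assms(3) by blast

lemma proj_cspan_id:
  assumes "finite E" "orthonormal E" "x \<in> cspan E"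
  shows "proj E x = x"
proof -
  have "x - proj E x \<in> cspan E" using assms by (intro cspan_diff proj_in_cspan)
  then have "cinner (x - proj E x) (x - proj E x) = 0"
    using diff_proj_orth_cspan[OF assms(1,2)] by blast
  then show ?thesis by (simp add: cinner_eq_zero_iff)
qed

lemma gram_schmidt:
  assumes "finite G"
  shows "\<exists>E. finite E \<and> orthonormal E \<and> G \<subseteq> cspan E \<and> E \<subseteq> cspan G"
  using assms
proof (induction G rule: finite_induct)
  case empty
  show ?case by (rule exI[of _ "{}"]) (simp add: orthonormal_def)
next
  case (insert g G)
  then obtain E where E: "finite E" "orthonormal E" "G \<subseteq> cspan E" "E \<subseteq> cspan G" by blast
  have sub: "cspan G \<subseteq> cspan (insert g G)" by (rule cspan_mono) blast
  define r where "r = g - proj E g"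
  show ?case
  proof (cases "r = 0")
    case True
    then have "g \<in> cspan E" using proj_in_cspan[of E g] by (simp add: r_def)
    then show ?thesis using E sub by (intro exI[of _ E]) auto
  next
    case False
    define e' where "e' = scaleC (complex_of_real (1 / norm r)) r"
    have ne': "norm e' = 1" using False by (simp add: e'_def norm_scaleC norm_divide)
    have orth: "cinner e e' = 0" if "e \<in> E" for e
      using cinner_diff_proj[OF E(1,2) that, of g]
      by (simp add: e'_def r_def cinner_scaleC_right)
    have orth2: "cinner e' e = 0" if "e \<in> E" for e
      using orth[OF that] cinner_commute[of e' e] by simp
    have "e' \<notin> E" using orth ne' cinner_self_one[OF ne'] by force
    have on: "orthonormal (insert e' E)"
      using E(2) ne' orth orth2 unfolding orthonormal_def by auto
    have "proj E g \<in> cspan (insert e' E)"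
      using proj_in_cspan[of E g] cspan_mono[of E "insert e' E"] by blast
    moreover have "r = scaleC (complex_of_real (norm r)) e'"
      using False by (simp add: e'_def scaleC_scaleC scaleC_one)
    then have "r \<in> cspan (insert e' E)" by (metis cspan_scale cspan_base insertI1)
    ultimately have "g \<in> cspan (insert e' E)"
      using cspan_add[of r _ "proj E g"] by (simp add: r_def)
    moreover have "G \<subseteq> cspan (insert e' E)" using E(3) cspan_mono[of E "insert e' E"] by blast
    moreover have "e' \<in> cspan (insert g G)"
    proof -
      have "proj E g \<in> cspan (insert g G)"
        using cspan_subset_trans[OF E(4)] proj_in_cspan[of E g] sub by blast
      moreover have "g \<in> cspan (insert g G)" by (intro cspan_base) simp
      ultimately have "r \<in> cspan (insert g G)" unfolding r_def
        by (intro cspan_diff)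
      then show ?thesis unfolding e'_def by (rule cspan_scale)
    qed
    moreover have "E \<subseteq> cspan (insert g G)" using E(4) sub by blast
    ultimately show ?thesis using E(1) on by (intro exI[of _ "insert e' E"]) auto
  qed
qed

lemma parallelogram:
  "(norm (a - b))^2 + (norm (a + b))^2 = 2 * (norm a)^2 + 2 * (norm (b::'a::complex_inner))^2"
  using norm_add_sq[of a b] norm_diff_sq[of a b] by simp

lemma lim_inv_plus1: "(\<lambda>k. 1 / (real k + 1)) \<longlonglongrightarrow> 0"
  using LIMSEQ_inverse_real_of_nat by (simp add: inverse_eq_divide add.commute)

lemma projection_exists:
  fixes x :: "'a::chilbert_space"
  assumes N: "closed_csubspace N"
  shows "\<exists>p\<in>N. \<forall>n\<in>N. cinner n (x - p) = 0"
proof -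
  have sub: "csubspace N" and cl: "closed N" using N by (auto simp: closed_csubspace_def)
  have N0: "0 \<in> N" and Nadd: "\<And>a b. a \<in> N \<Longrightarrow> b \<in> N \<Longrightarrow> a + b \<in> N"
    and Nsc: "\<And>c a. a \<in> N \<Longrightarrow> scaleC c a \<in> N"
    using sub by (auto simp: csubspace_def)
  have Nminus: "a - b \<in> N" if "a \<in> N" "b \<in> N" for a b
  proof -
    have "scaleC (-1) b \<in> N" using Nsc that by blast
    then have "a + scaleC (-1) b \<in> N" using Nadd that by blast
    then show ?thesis by (simp add: scaleC_minus_left scaleC_one)
  qed
  define S where "S = (\<lambda>n. norm (x - n)) ` N"
  define d where "d = Inf S"
  have Sne: "S \<noteq> {}" using N0 by (auto simp: S_def)
  have bdd: "bdd_below S" by (auto simp: S_def intro!: bdd_belowI[of _ 0])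
  have dle: "d \<le> norm (x - n)" if "n \<in> N" for n
    unfolding d_def S_def using bdd that by (auto intro!: cInf_lower simp: S_def)
  have d0: "0 \<le> d" using dle[OF N0] N0 unfolding d_def S_def
    by (auto intro!: cInf_greatest)
  have approx: "\<exists>n\<in>N. (norm (x - n))^2 < d^2 + e" if "e > 0" for e
  proof -
    have "d < sqrt (d^2 + e)" using d0 that
      by (metis less_add_same_cancel1 real_sqrt_abs real_sqrt_less_mono abs_of_nonneg)
    then obtain s where "s \<in> S" "s < sqrt (d^2 + e)" using cInf_lessD[OF Sne] d_def by blast
    then obtain n where n: "n \<in> N" "norm (x - n) < sqrt (d^2 + e)" by (auto simp: S_def)
    then have "(norm (x - n))^2 < (sqrt (d^2 + e))^2"
      by (intro power_strict_mono) auto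
    then show ?thesis using n that d0 by (intro bexI[of _ n]) auto
  qed
  have "\<forall>k. \<exists>n. n \<in> N \<and> (norm (x - n))^2 < d^2 + 1 / (real k + 1)"
    using approx by (metis of_nat_less_0_iff add_pos_pos zero_less_one of_nat_0_le_iff
        divide_pos_pos le_less_trans linorder_not_le not_one_le_zero add_nonneg_pos zero_less_divide_1_iff)
  then obtain nn where nn: "\<And>k. nn k \<in> N" "\<And>k. (norm (x - nn k))^2 < d^2 + 1 / (real k + 1)"
    by metis
  have mid: "4 * d^2 \<le> (norm ((x - nn j) + (x - nn k)))^2" for j k
  proof -
    have h: "scaleR 2 (scaleC (1/2) (nn j + nn k)) = nn j + nn k"
      by (simp add: scaleR_scaleC scaleC_scaleC scaleC_one)
    have "(x - nn j) + (x - nn k) = scaleR 2 x - scaleR 2 (scaleC (1/2) (nn j + nn k))"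
      unfolding h by (simp add: scaleR_2 algebra_simps)
    also have "\<dots> = scaleR 2 (x - scaleC (1/2) (nn j + nn k))"
      by (simp add: scale_right_diff_distrib)
    finally have "(x - nn j) + (x - nn k) = scaleR 2 (x - scaleC (1/2) (nn j + nn k))" .
    then have "norm ((x - nn j) + (x - nn k)) = 2 * norm (x - scaleC (1/2) (nn j + nn k))"
      by simp
    moreover have "d \<le> norm (x - scaleC (1/2) (nn j + nn k))"
      using nn(1) by (intro dle Nsc Nadd)
    ultimately show ?thesis using d0 by (simp add: power_mult_distrib power_mono)
  qed
  have cauchy_bound: "(norm (nn j - nn k))^2 \<le> 2 / (real j + 1) + 2 / (real k + 1)" for j k
  proof -
    have "(norm (nn k - nn j))^2 = (norm ((x - nn j) - (x - nn k)))^2" by (simp add: algebra_simps)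
    also have "\<dots> = 2 * (norm (x - nn j))^2 + 2 * (norm (x - nn k))^2
                     - (norm ((x - nn j) + (x - nn k)))^2"
      using parallelogram[of "x - nn j" "x - nn k"] by simp
    also have "\<dots> \<le> 2 / (real j + 1) + 2 / (real k + 1)"
      using nn(2)[of j] nn(2)[of k] mid[of j k] by simp
    finally show ?thesis by (simp add: norm_minus_commute)
  qed
  have "Cauchy nn"
  proof (rule CauchyI)
    fix e :: real assume e: "e > 0"
    obtain M :: nat where M: "4 / e^2 < real M" using reals_Archimedean2 by blast
    show "\<exists>M. \<forall>m\<ge>M. \<forall>n\<ge>M. norm (nn m - nn n) < e"
    proof (intro exI[of _ M] allI impI)
      fix m n assume mn: "M \<le> m" "M \<le> n"
      have Mpos: "real M > 0" using M e by (smt (verit) divide_pos_pos zero_less_power)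
      have "2 / (real m + 1) \<le> 2 / real M" using mn Mpos by (intro divide_left_mono) auto
      moreover have "2 / (real n + 1) \<le> 2 / real M" using mn Mpos by (intro divide_left_mono) auto
      moreover have "4 / real M < e^2" using M e Mpos
        by (metis divide_less_eq mult.commute zero_less_power pos_divide_less_eq)
      ultimately have "(norm (nn m - nn n))^2 < e^2"
        using cauchy_bound[of m n] by (smt (verit) add_divide_distrib)
      then show "norm (nn m - nn n) < e" using e by (simp add: power_less_imp_less_base)
    qed
  qed
  then obtain p where p: "nn \<longlonglongrightarrow> p" using Cauchy_convergent_iff convergent_def by blast
  have pN: "p \<in> N" using closed_sequentially[OF cl nn(1) p] .
  have "(\<lambda>k. (norm (x - nn k))^2) \<longlonglongrightarrow> (norm (x - p))^2"
    by (intro tendsto_intros p)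
  moreover have "(\<lambda>k. d^2 + 1 / (real k + 1)) \<longlonglongrightarrow> d^2 + 0"
    by (intro tendsto_intros) (rule lim_inv_plus1)
  ultimately have "(norm (x - p))^2 \<le> d^2 + 0"
    using nn(2) by (intro LIMSEQ_le[of _ _ "\<lambda>k. d^2 + 1 / (real k + 1)"]) (auto intro: less_imp_le)
  then have pmin: "(norm (x - p))^2 \<le> (norm (x - n))^2" if "n \<in> N" for n
    using dle[OF that] d0 by (smt (verit) power_mono)
  show ?thesis
  proof (intro bexI[OF _ pN] ballI)
    fix n assume n: "n \<in> N"
    define z where "z = x - p"
    define c where "c = cinner n z"
    define t where "t = 1 / ((norm n)^2 + 1)"
    have np: "(norm n)^2 + 1 > 0" by (smt (verit) zero_le_power2)
    have t0: "t > 0" using np by (simp add: t_def)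
    have tn: "t * (norm n)^2 < 1" using np by (simp add: t_def)
    define s where "s = complex_of_real t * c"
    have "p + scaleC s n \<in> N" using pN n Nadd Nsc by blast
    then have "(norm z)^2 \<le> (norm (z - scaleC s n))^2"
      using pmin[of "p + scaleC s n"] by (simp add: z_def algebra_simps)
    also have "\<dots> = (norm z)^2 + (cmod s)^2 * (norm n)^2 - 2 * Re (cinner z (scaleC s n))"
      by (simp add: norm_diff_sq norm_scaleC power_mult_distrib)
    also have "cinner z (scaleC s n) = complex_of_real (t * (cmod c)^2)"
    proof -
      have "cinner z (scaleC s n) = complex_of_real t * (c * cnj c)"
        by (simp add: cinner_scaleC_right s_def c_def cnj_cinner)
      then show ?thesis by (simp add: complex_norm_square[symmetric])
    qed
    also have "(cmod s)^2 = t^2 * (cmod c)^2"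
      using t0 by (simp add: s_def norm_mult power_mult_distrib)
    finally have "0 \<le> t^2 * (cmod c)^2 * (norm n)^2 - 2 * (t * (cmod c)^2)" by simp
    then have "0 \<le> t * ((cmod c)^2 * (t * (norm n)^2 - 2))"
      by (simp add: power2_eq_square algebra_simps)
    then have "0 \<le> (cmod c)^2 * (t * (norm n)^2 - 2)"
      using t0 by (simp add: zero_le_mult_iff)
    moreover have "t * (norm n)^2 - 2 < 0" using tn by simp
    ultimately have "(cmod c)^2 \<le> 0"
      by (smt (verit) mult_pos_neg zero_le_power2)
    then have "c = 0" by simp
    then show "cinner n (x - p) = 0" by (simp add: c_def z_def)
  qed
qed

lemma cinner_ext: "(\<And>x. cinner a x = cinner b x) \<Longrightarrow> a = b"
proof -
  assume h: "\<And>x. cinner a x = cinner b x"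
  have "cinner (a - b) (a - b) = 0" using h[of "a - b"] by (simp add: cinner_diff_left)
  then show "a = b" by (simp add: cinner_eq_zero_iff)
qed

lemma functional_bounded_linear:
  fixes f :: "'a::complex_normed_vector \<Rightarrow> complex"
  assumes add: "\<And>x y. f (x + y) = f x + f y" and sc: "\<And>c x. f (scaleC c x) = c * f x"
    and bnd: "\<And>x. cmod (f x) \<le> norm x * K"
  shows "bounded_linear f"
proof (rule bounded_linear_intro[OF add _ bnd])
  fix r x show "f (scaleR r x) = scaleR r (f x)"
    by (simp add: scaleR_scaleC sc scaleR_conv_of_real)
qed

lemma bounded_clinear_bounded_linear:
  assumes "bounded_clinear f"
  shows "bounded_linear f"
proof -
  from assms obtain K where add: "\<And>x y. f (x + y) = f x + f y"
    and sc: "\<And>c x. f (scaleC c x) = scaleC c (f x)" and bnd: "\<And>x. norm (f x) \<le> norm x * K"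
    unfolding bounded_clinear_def clinear_def by blast
  show ?thesis
  proof (rule bounded_linear_intro[OF add _ bnd])
    fix r x show "f (scaleR r x) = scaleR r (f x)"
      by (simp add: scaleR_scaleC sc)
  qed
qed

lemma riesz:
  fixes f :: "'a::chilbert_space \<Rightarrow> complex"
  assumes add: "\<And>x y. f (x + y) = f x + f y" and sc: "\<And>c x. f (scaleC c x) = c * f x"
    and bnd: "\<And>x. cmod (f x) \<le> norm x * K"
  shows "\<exists>z. \<forall>x. f x = cinner z x"
proof (cases "\<forall>x. f x = 0")
  case True then show ?thesis by (intro exI[of _ 0]) simp
next
  case False
  then obtain x0 where x0: "f x0 \<noteq> 0" by blast
  have bl: "bounded_linear f" by (rule functional_bounded_linear[OF add sc bnd])
  interpret bl: bounded_linear f by (rule bl)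
  define N where "N = {x. f x = 0}"
  have "closed N" unfolding N_def
    by (intro closed_Collect_eq linear_continuous_on bl continuous_on_const)
  moreover have "csubspace N" unfolding N_def csubspace_def using add sc by simp
  ultimately have "closed_csubspace N" by (simp add: closed_csubspace_def)
  from projection_exists[OF this, of x0] obtain p where p: "p \<in> N" "\<And>n. n \<in> N \<Longrightarrow> cinner n (x0 - p) = 0"
    by blast
  define u where "u = x0 - p"
  have fu: "f u = f x0" using p(1) by (simp add: u_def N_def bl.diff)
  then have u0: "u \<noteq> 0" using x0 bl.zero by auto
  have nu: "norm u > 0" using u0 by simp
  define z where "z = scaleC (cnj (f u) / complex_of_real ((norm u)^2)) u"
  show ?thesis
  proof (intro exI[of _ z] allI)
    fix x
    define y where "y = x - scaleC (f x / f u) u"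
    have "f y = 0" using x0 fu by (simp add: y_def bl.diff sc)
    then have "cinner y u = 0" using p(2)[of y] by (simp add: N_def u_def)
    then have "cinner x u = cnj (f x / f u) * complex_of_real ((norm u)^2)"
      by (simp add: y_def cinner_diff_left cinner_scaleC_left cinner_self)
    then have "cinner u x = (f x / f u) * complex_of_real ((norm u)^2)"
      by (metis cnj_cinner complex_cnj_cnj complex_cnj_mult complex_cnj_complex_of_real)
    then show "f x = cinner z x"
      using nu x0 fu by (simp add: z_def cinner_scaleC_left field_simps)
  qed
qed

lemma adjoint_exists:
  fixes C :: "'b::chilbert_space \<Rightarrow> 'a::chilbert_space"
  assumes "bounded_clinear C"
  shows "\<exists>z. \<forall>x. cinner z x = cinner y (C x)"
proof -
  from assms obtain K where add: "\<And>x y. C (x + y) = C x + C y"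
    and sc: "\<And>c x. C (scaleC c x) = scaleC c (C x)" and bnd: "\<And>x. norm (C x) \<le> norm x * K"
    unfolding bounded_clinear_def clinear_def by blast
  have "\<exists>z. \<forall>x. cinner y (C x) = cinner z x"
  proof (rule riesz[where K = "norm y * K"])
    fix x1 x2 show "cinner y (C (x1 + x2)) = cinner y (C x1) + cinner y (C x2)"
      by (simp add: add cinner_add_right)
  next
    fix c x show "cinner y (C (scaleC c x)) = c * cinner y (C x)"
      by (simp add: sc cinner_scaleC_right)
  next
    fix x
    have "cmod (cinner y (C x)) \<le> norm y * norm (C x)" by (rule cauchy_schwarz)
    also have "\<dots> \<le> norm y * (norm x * K)" by (intro mult_left_mono bnd) simp
    finally show "cmod (cinner y (C x)) \<le> norm x * (norm y * K)" by (simp add: ac_simps)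
  qed
  then show ?thesis by metis
qed

lemma cadjoint_prop:
  fixes C :: "'b::chilbert_space \<Rightarrow> 'a::chilbert_space"
  assumes "bounded_clinear C"
  shows "cinner (cadjoint C y) x = cinner y (C x)"
proof -
  have ex1: "\<exists>!z. \<forall>x. cinner z x = cinner y (C x)"
    using adjoint_exists[OF assms, of y] cinner_ext by metis
  show ?thesis unfolding cadjoint_def using theI'[OF ex1] by blast
qed

lemma cadjoint_prop2:
  fixes C :: "'b::chilbert_space \<Rightarrow> 'a::chilbert_space"
  assumes "bounded_clinear C"
  shows "cinner x (cadjoint C y) = cinner (C x) y"
  using cadjoint_prop[OF assms, of y x] by (metis cnj_cinner)

lemma cadjoint_add:
  fixes C :: "'b::chilbert_space \<Rightarrow> 'a::chilbert_space"
  assumes "bounded_clinear C"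
  shows "cadjoint C (y1 + y2) = cadjoint C y1 + cadjoint C y2"
  by (rule cinner_ext) (simp add: cadjoint_prop[OF assms] cinner_add_left)

lemma cadjoint_scaleC:
  fixes C :: "'b::chilbert_space \<Rightarrow> 'a::chilbert_space"
  assumes "bounded_clinear C"
  shows "cadjoint C (scaleC c y) = scaleC c (cadjoint C y)"
  by (rule cinner_ext) (simp add: cadjoint_prop[OF assms] cinner_scaleC_left)

lemma cadjoint_contraction:
  fixes C :: "'b::chilbert_space \<Rightarrow> 'a::chilbert_space"
  assumes "bounded_clinear C" "contraction C"
  shows "norm (cadjoint C y) \<le> norm y"
proof -
  let ?z = "cadjoint C y"
  have "(norm ?z)^2 = Re (cinner ?z ?z)" by (simp add: cinner_self_Re)
  also have "\<dots> = Re (cinner y (C ?z))" by (simp add: cadjoint_prop[OF assms(1)])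
  also have "\<dots> \<le> cmod (cinner y (C ?z))" by (rule complex_Re_le_cmod)
  also have "\<dots> \<le> norm y * norm (C ?z)" by (rule cauchy_schwarz)
  also have "\<dots> \<le> norm y * norm ?z" using assms(2) by (intro mult_left_mono) (auto simp: contraction_def)
  finally have "norm ?z * norm ?z \<le> norm y * norm ?z" by (simp add: power2_eq_square)
  then show ?thesis
    by (metis mult_right_le_imp_le norm_ge_zero order.strict_iff_order norm_zero)
qed

lemma cadjoint_bounded_clinear:
  fixes C :: "'b::chilbert_space \<Rightarrow> 'a::chilbert_space"
  assumes "bounded_clinear C" "contraction C"
  shows "bounded_clinear (cadjoint C)"
  unfolding bounded_clinear_def clinear_def
  using cadjoint_add[OF assms(1)] cadjoint_scaleC[OF assms(1)] cadjoint_contraction[OF assms]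
  by (metis mult.right_neutral)

lemma norm_sum_orth:
  assumes "finite F" "\<And>u w. u \<in> F \<Longrightarrow> w \<in> F \<Longrightarrow> u \<noteq> w \<Longrightarrow> cinner (f u) (f w) = 0"
  shows "(norm (sum f F))^2 = (\<Sum>u\<in>F. (norm (f u))^2)"
  using assms
proof (induction F rule: finite_induct)
  case empty then show ?case by simp
next
  case (insert a F)
  have "cinner (f a) (sum f F) = 0"
    using insert by (auto simp: cinner_sum_right intro!: sum.neutral)
  then have "(norm (f a + sum f F))^2 = (norm (f a))^2 + (norm (sum f F))^2"
    by (rule pythagoras)
  then show ?case using insert by simp
qed

lemma clinear_add: "clinear L \<Longrightarrow> L (x + y) = L x + L y"
  by (simp add: clinear_def)
lemma clinear_scaleC: "clinear L \<Longrightarrow> L (scaleC c x) = scaleC c (L x)"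
  by (simp add: clinear_def)
lemma clinear_zero: "clinear L \<Longrightarrow> L 0 = 0"
  using clinear_scaleC[of L 0 0] by simp
lemma clinear_diff: "clinear L \<Longrightarrow> L (x - y) = L x - L y"
  using clinear_add[of L "x - y" y] by (simp add: algebra_simps)
lemma clinear_sum: "clinear L \<Longrightarrow> L (sum f A) = (\<Sum>a\<in>A. L (f a))"
  by (induction A rule: infinite_finite_induct) (auto simp: clinear_add clinear_zero)

lemma clinear_cspan_image:
  assumes "clinear L" "x \<in> cspan S"
  shows "L x \<in> cspan (L ` S)"
proof -
  from assms(2) obtain F c where x: "x = sum (\<lambda>v. scaleC (c v) v) F" "finite F" "F \<subseteq> S"
    unfolding cspan_def by blast
  have "L x = (\<Sum>v\<in>F. scaleC (c v) (L v))"
    using assms(1) by (simp add: x clinear_sum clinear_scaleC)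
  also have "\<dots> \<in> cspan (L ` S)"
    using x(3) by (intro cspan_sum cspan_scale cspan_base) auto
  finally show ?thesis .
qed

lemma linear_orth_cspan:
  assumes L: "clinear L" and h: "\<And>w. w \<in> W \<Longrightarrow> cinner (L w) a = cinner w b" and x: "x \<in> cspan W"
  shows "cinner (L x) a = cinner x b"
proof -
  from x obtain F c where x: "x = sum (\<lambda>v. scaleC (c v) v) F" "finite F" "F \<subseteq> W"
    unfolding cspan_def by blast
  have "cinner (L x) a = (\<Sum>v\<in>F. cnj (c v) * cinner (L v) a)"
    using L by (simp add: x clinear_sum clinear_scaleC cinner_sum_left cinner_scaleC_left)
  also have "\<dots> = (\<Sum>v\<in>F. cnj (c v) * cinner v b)"
    using x(3) h by (intro sum.cong) auto
  also have "\<dots> = cinner x b"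
    by (simp add: x cinner_sum_left cinner_scaleC_left)
  finally show ?thesis .
qed

lemma bb_scaleC: "bounded_bilinear (scaleC :: complex \<Rightarrow> 'a::complex_normed_vector \<Rightarrow> 'a)"
proof
  fix a a' :: complex and b b' :: 'a and r :: real
  show "scaleC (a + a') b = scaleC a b + scaleC a' b" by (rule scaleC_add_left)
  show "scaleC a (b + b') = scaleC a b + scaleC a b'" by (rule scaleC_add_right)
  show "scaleC (scaleR r a) b = scaleR r (scaleC a b)"
    by (simp add: scaleR_scaleC scaleC_scaleC scaleR_conv_of_real)
  show "scaleC a (scaleR r b) = scaleR r (scaleC a b)"
    by (simp add: scaleR_scaleC scaleC_scaleC mult.commute)
next
  show "\<exists>K. \<forall>a b::'a. norm (scaleC (a::complex) b) \<le> norm a * norm b * K"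
    by (rule exI[of _ 1]) (simp add: norm_scaleC)
qed

lemmas tendsto_scaleC[tendsto_intros] = bounded_bilinear.tendsto[OF bb_scaleC]
lemmas continuous_on_scaleC[continuous_intros] = bounded_bilinear.continuous_on[OF bb_scaleC]

lemma csubspace_closure:
  fixes S :: "'a::complex_normed_vector set"
  assumes "csubspace S"
  shows "csubspace (closure S)"
proof -
  have S: "0 \<in> S" "\<And>x y. x \<in> S \<Longrightarrow> y \<in> S \<Longrightarrow> x + y \<in> S" "\<And>c x. x \<in> S \<Longrightarrow> scaleC c x \<in> S"
    using assms by (auto simp: csubspace_def)
  have "x + y \<in> closure S" if "x \<in> closure S" "y \<in> closure S" for x y
  proof -
    from that obtain xs ys where "\<And>n. xs n \<in> S" "xs \<longlonglongrightarrow> x" "\<And>n. ys n \<in> S" "ys \<longlonglongrightarrow> y"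
      unfolding closure_sequential by metis
    then show ?thesis unfolding closure_sequential
      by (intro exI[of _ "\<lambda>n. xs n + ys n"]) (auto intro!: tendsto_intros S)
  qed
  moreover have "scaleC c x \<in> closure S" if "x \<in> closure S" for x c
  proof -
    from that obtain xs where "\<And>n. xs n \<in> S" "xs \<longlonglongrightarrow> x"
      unfolding closure_sequential by metis
    then show ?thesis unfolding closure_sequential
      by (intro exI[of _ "\<lambda>n. scaleC c (xs n)"]) (auto intro!: tendsto_intros S)
  qed
  ultimately show ?thesis using S(1) closure_subset unfolding csubspace_def by blast
qed

lemma closed_csubspace_closure:
  fixes S :: "'a::complex_normed_vector set"
  shows "csubspace S \<Longrightarrow> closed_csubspace (closure S)"
  by (simp add: closed_csubspace_def csubspace_closure)

lemma subseq_finite_bounded: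
  fixes c :: "nat \<Rightarrow> 'e \<Rightarrow> complex"
  assumes "finite E" "\<And>k e. e \<in> E \<Longrightarrow> cmod (c k e) \<le> B"
  shows "\<exists>r. strict_mono r \<and> (\<forall>e\<in>E. convergent (\<lambda>k. c (r k) e))"
  using assms
proof (induction E arbitrary: c rule: finite_induct)
  case empty then show ?case by (intro exI[of _ id]) (auto simp: strict_mono_def)
next
  case (insert a E)
  then obtain r where r: "strict_mono r" "\<forall>e\<in>E. convergent (\<lambda>k. c (r k) e)" by blast
  have "bounded (range (\<lambda>k. c (r k) a))"
    using insert.prems by (auto simp: bounded_iff)
  then obtain l s where s: "strict_mono s" "((\<lambda>k. c (r k) a) \<circ> s) \<longlonglongrightarrow> l"
    using bounded_imp_convergent_subsequence by blast
  have "strict_mono (r \<circ> s)" using r(1) s(1) by (rule strict_mono_o)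
  moreover have "convergent (\<lambda>k. c ((r \<circ> s) k) a)"
    using s(2) by (auto simp: convergent_def o_def)
  moreover have "convergent (\<lambda>k. c ((r \<circ> s) k) e)" if "e \<in> E" for e
  proof -
    from r(2) that obtain m where "(\<lambda>k. c (r k) e) \<longlonglongrightarrow> m" by (auto simp: convergent_def)
    then have "((\<lambda>k. c (r k) e) \<circ> s) \<longlonglongrightarrow> m" using s(1) by (rule LIMSEQ_subseq_LIMSEQ)
    then show ?thesis by (auto simp: convergent_def o_def)
  qed
  ultimately show ?case by (intro exI[of _ "r \<circ> s"]) (auto simp: o_def)
qed

definition Tmap :: "('b::chilbert_space \<Rightarrow> 'a::chilbert_space) \<Rightarrow> 'a \<times> 'b \<Rightarrow> 'a \<times> 'b" where
  "Tmap C = (\<lambda>(x, y). (x + C y, cadjoint C x + y))"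
definition Kmap :: "('b::chilbert_space \<Rightarrow> 'a::chilbert_space) \<Rightarrow> 'a \<times> 'b \<Rightarrow> 'a \<times> 'b" where
  "Kmap C = (\<lambda>(x, y). (C y, cadjoint C x))"

lemma Tmap_Pair[simp]: "Tmap C (x, y) = (x + C y, cadjoint C x + y)"
  by (simp add: Tmap_def)
lemma Kmap_Pair[simp]: "Kmap C (x, y) = (C y, cadjoint C x)"
  by (simp add: Kmap_def)
lemma Tmap_Kmap: "Tmap C u = u + Kmap C u"
  by (cases u) (simp add: add.commute)

lemma scaleC_Pair: "scaleC c (x, y) = (scaleC c x, scaleC c y)"
  by (simp add: scaleC_prod_def)

lemma Kmap_clinear:
  fixes C :: "'b::chilbert_space \<Rightarrow> 'a::chilbert_space"
  assumes "bounded_clinear C"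
  shows "clinear (Kmap C)"
proof -
  have C: "clinear C" using assms by (simp add: bounded_clinear_def)
  show ?thesis unfolding clinear_def
  proof (intro conjI allI)
    fix u v :: "'a \<times> 'b"
    show "Kmap C (u + v) = Kmap C u + Kmap C v"
      by (cases u; cases v) (simp add: clinear_add[OF C] cadjoint_add[OF assms])
  next
    fix c and u :: "'a \<times> 'b"
    show "Kmap C (scaleC c u) = scaleC c (Kmap C u)"
      by (cases u) (simp add: scaleC_Pair clinear_scaleC[OF C] cadjoint_scaleC[OF assms])
  qed
qed

lemma Tmap_clinear:
  fixes C :: "'b::chilbert_space \<Rightarrow> 'a::chilbert_space"
  assumes "bounded_clinear C"
  shows "clinear (Tmap C)"
  using Kmap_clinear[OF assms] unfolding clinear_def Tmap_Kmap
  by (simp add: scaleC_add_right algebra_simps)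

lemma Kmap_bounded_linear:
  fixes C :: "'b::chilbert_space \<Rightarrow> 'a::chilbert_space"
  assumes "bounded_clinear C" "contraction C"
  shows "bounded_linear (Kmap C)"
proof -
  have "bounded_clinear (Kmap C)"
    unfolding bounded_clinear_def
  proof (intro conjI exI allI)
    show "clinear (Kmap C)" by (rule Kmap_clinear[OF assms(1)])
  next
    fix u :: "'a \<times> 'b"
    obtain x y where u: "u = (x, y)" by (cases u)
    have "norm (C y) \<le> norm y" using assms(2) by (simp add: contraction_def)
    moreover have "norm (cadjoint C x) \<le> norm x" by (rule cadjoint_contraction[OF assms])
    ultimately have "(norm (C y))^2 + (norm (cadjoint C x))^2 \<le> (norm x)^2 + (norm y)^2"
      by (smt (verit) norm_ge_zero power_mono)
    then show "norm (Kmap C u) \<le> norm u * 1"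
      by (simp add: u norm_Pair)
  qed
  then show ?thesis by (rule bounded_clinear_bounded_linear)
qed

lemma Tmap_bounded_linear:
  fixes C :: "'b::chilbert_space \<Rightarrow> 'a::chilbert_space"
  assumes "bounded_clinear C" "contraction C"
  shows "bounded_linear (Tmap C)"
  unfolding Tmap_Kmap[abs_def]
  by (intro bounded_linear_add bounded_linear_ident Kmap_bounded_linear[OF assms])

lemma Kmap_selfadj:
  fixes C :: "'b::chilbert_space \<Rightarrow> 'a::chilbert_space"
  assumes "bounded_clinear C"
  shows "cinner (Kmap C u) v = cinner u (Kmap C v)"
  by (cases u; cases v) (simp add: cinner_Pair cadjoint_prop[OF assms] cadjoint_prop2[OF assms] add.commute)

lemma nonfinite_rank_orth:
  fixes C :: "'b::chilbert_space \<Rightarrow> 'a::chilbert_space"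
  assumes bc: "bounded_clinear C" and nf: "\<not> finite_rank C" and G: "finite G"
  shows "\<exists>y. (\<forall>g\<in>G. cinner g y = 0) \<and> norm y = 1 \<and> C y \<noteq> 0"
proof (rule ccontr)
  assume no: "\<not> ?thesis"
  have Cl: "clinear C" using bc by (simp add: bounded_clinear_def)
  have ker: "C y = 0" if "\<forall>g\<in>G. cinner g y = 0" for y
  proof (cases "y = 0")
    case True then show ?thesis by (simp add: clinear_zero[OF Cl])
  next
    case False
    define y' where "y' = scaleC (complex_of_real (1 / norm y)) y"
    have "norm y' = 1" using False by (simp add: y'_def norm_scaleC norm_divide)
    moreover have "\<forall>g\<in>G. cinner g y' = 0" using that by (simp add: y'_def cinner_scaleC_right)
    ultimately have "C y' = 0" using no by blast
    then have "scaleC (complex_of_real (norm y)) (C y') = 0" by simp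
    moreover have "scaleC (complex_of_real (norm y)) y' = y"
      using False by (simp add: y'_def scaleC_scaleC scaleC_one)
    ultimately show ?thesis by (metis clinear_scaleC[OF Cl])
  qed
  obtain E where E: "finite E" "orthonormal E" "G \<subseteq> cspan E" "E \<subseteq> cspan G"
    using gram_schmidt[OF G] by blast
  have "range C \<subseteq> cspan (C ` E)"
  proof
    fix z assume "z \<in> range C"
    then obtain x where z: "z = C x" by blast
    have "C (x - proj E x) = 0"
      using E by (intro ker) (auto intro: diff_proj_orth_cspan)
    then have "C x = C (proj E x)" by (simp add: clinear_diff[OF Cl])
    then show "z \<in> cspan (C ` E)" using clinear_cspan_image[OF Cl proj_in_cspan] z by metis
  qed
  then have "finite_rank C" unfolding finite_rank_def using E(1) by blast
  then show False using nf by blast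
qed

fun build :: "('a list \<Rightarrow> 'a \<Rightarrow> bool) \<Rightarrow> nat \<Rightarrow> 'a list" where
  "build P 0 = []"
| "build P (Suc n) = build P n @ [SOME y. P (build P n) y]"

definition seqb :: "('a list \<Rightarrow> 'a \<Rightarrow> bool) \<Rightarrow> nat \<Rightarrow> 'a" where
  "seqb P k = (SOME y. P (build P k) y)"

lemma build_eq_map: "build P n = map (seqb P) [0..<n]"
  by (induction n) (auto simp: seqb_def)

lemma seqb_prop:
  assumes "\<And>ys. \<exists>y. P ys y"
  shows "P (map (seqb P) [0..<k]) (seqb P k)"
proof -
  have "P (build P k) (seqb P k)" unfolding seqb_def using assms by (rule someI_ex)
  then show ?thesis by (simp add: build_eq_map)
qed

lemma exists_seq:
  fixes C :: "'b::chilbert_space \<Rightarrow> 'a::chilbert_space" and A :: "'b \<Rightarrow> 'b"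
  assumes bc: "bounded_clinear C" and nf: "\<not> finite_rank C"
  shows "\<exists>y::nat \<Rightarrow> 'b. \<forall>n. norm (y n) = 1 \<and> C (y n) \<noteq> 0 \<and>
     (\<forall>m<n. cinner (y m) (y n) = 0 \<and> cinner (A (y m)) (y n) = 0 \<and> cinner (A (A (y m))) (y n) = 0)"
proof -
  define P where "P = (\<lambda>ys y. norm y = 1 \<and> C y \<noteq> 0 \<and>
     (\<forall>z\<in>set ys. cinner z y = 0 \<and> cinner (A z) y = 0 \<and> cinner (A (A z)) y = 0))"
  have ex: "\<exists>y. P ys y" for ys
  proof -
    define G where "G = set ys \<union> A ` set ys \<union> (\<lambda>z. A (A z)) ` set ys"
    have "finite G" by (simp add: G_def)
    from nonfinite_rank_orth[OF bc nf this] obtain y where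
      "\<forall>g\<in>G. cinner g y = 0" "norm y = 1" "C y \<noteq> 0" by blast
    then show ?thesis unfolding P_def G_def by (intro exI[of _ y]) auto
  qed
  define y where "y = seqb P"
  have "P (map y [0..<n]) (y n)" for n unfolding y_def by (rule seqb_prop[OF ex])
  then have "\<forall>n. norm (y n) = 1 \<and> C (y n) \<noteq> 0 \<and>
     (\<forall>m<n. cinner (y m) (y n) = 0 \<and> cinner (A (y m)) (y n) = 0 \<and> cinner (A (A (y m))) (y n) = 0)"
    unfolding P_def by auto
  then show ?thesis by blast
qed

lemma cadjoint_scaleR:
  fixes C :: "'b::chilbert_space \<Rightarrow> 'a::chilbert_space"
  assumes "bounded_clinear C"
  shows "cadjoint C (scaleR t y) = scaleR t (cadjoint C y)"
  by (simp add: scaleR_scaleC cadjoint_scaleC[OF assms])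

lemma cadjoint_zero:
  fixes C :: "'b::chilbert_space \<Rightarrow> 'a::chilbert_space"
  assumes "bounded_clinear C"
  shows "cadjoint C 0 = 0"
  using cadjoint_scaleC[OF assms, of 0 0] by simp

lemma clinear_scaleR: "clinear L \<Longrightarrow> L (scaleR t x) = scaleR t (L x)"
  by (simp add: scaleR_scaleC clinear_scaleC)

lemma Tmap_vec:
  fixes C :: "'b::chilbert_space \<Rightarrow> 'a::chilbert_space"
  assumes bc: "bounded_clinear C"
  shows "Tmap C (scaleR t (C y), y) = (scaleR (1 + t) (C y), scaleR t (cadjoint C (C y)) + y)"
  by (simp add: cadjoint_scaleR[OF bc] algebra_simps)

lemma choose_t:
  fixes C :: "'b::chilbert_space \<Rightarrow> 'a::chilbert_space"
  assumes bc: "bounded_clinear C" and ct: "contraction C"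
    and y: "norm y = 1" and tau: "1 < \<tau>" "\<tau> \<le> 1 + (norm (C y))^2"
  shows "\<exists>t. (norm (Tmap C (scaleR t (C y), y)))^2 = \<tau> * (norm (scaleR t (C y), y))^2"
proof -
  define v where "v = (\<lambda>t::real. (scaleR t (C y), y))"
  define g where "g = (\<lambda>t. (norm (Tmap C (v t)))^2 - \<tau> * (norm (v t))^2)"
  have bl: "bounded_linear (Tmap C)" by (rule Tmap_bounded_linear[OF bc ct])
  have cont: "continuous_on {-1..0} g"
    unfolding g_def v_def
    by (intro continuous_intros linear_continuous_on[OF bl, THEN continuous_on_compose2[of UNIV]])
       auto
  have g0: "g 0 \<ge> 0"
    using tau y by (simp add: g_def v_def norm_Pair cadjoint_zero[OF bc])
  have gm1: "g (-1) \<le> 0"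
  proof -
    let ?a = "norm (C y)" and ?Ay = "cadjoint C (C y)"
    have "Tmap C (v (-1)) = (0, y - ?Ay)"
      unfolding v_def using Tmap_vec[OF bc, of "-1" y] by simp
    then have "(norm (Tmap C (v (-1))))^2 = (norm (y - ?Ay))^2" by (simp)
    also have "\<dots> = 1 + (norm ?Ay)^2 - 2 * Re (cinner y ?Ay)"
      using y by (simp add: norm_diff_sq)
    also have "\<dots> \<le> 1 + ?a^2"
    proof -
      have ca: "cinner y ?Ay = complex_of_real (?a^2)"
        by (simp add: cadjoint_prop2[OF bc] cinner_self)
      have "norm ?Ay \<le> ?a" by (rule cadjoint_contraction[OF bc ct])
      then have sq: "(norm ?Ay)^2 \<le> ?a^2" by (intro power_mono) auto
      show ?thesis unfolding ca Re_complex_of_real using sq zero_le_power2[of ?a] by linarith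
    qed
    finally have "(norm (Tmap C (v (-1))))^2 \<le> 1 + ?a^2" .
    moreover have "(norm (v (-1)))^2 = ?a^2 + 1" using y by (simp add: v_def norm_Pair)
    moreover have "1 + ?a^2 \<le> \<tau> * (?a^2 + 1)" using tau
      by (smt (verit) mult_le_cancel_right1 zero_le_power2)
    ultimately show ?thesis by (simp add: g_def)
  qed
  obtain t where "-1 \<le> t" "t \<le> 0" "g t = 0"
    using IVT'[of g "-1" 0 0] cont g0 gm1 by auto
  then show ?thesis unfolding g_def v_def by (intro exI[of _ t]) simp
qed

lemma quad_zero:
  fixes \<beta> :: complex and D :: real
  assumes D: "D \<ge> 0" and h: "\<And>s. 0 \<le> (cmod s)^2 * D + 2 * Re (s * \<beta>)"
  shows "\<beta> = 0"
proof -
  define t where "t = 1 / (D + 1)"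
  have t0: "t > 0" using D by (simp add: t_def)
  have tD: "t * D < 1" using D by (simp add: t_def)
  define s where "s = - (complex_of_real t * cnj \<beta>)"
  have "(cmod s)^2 = t^2 * (cmod \<beta>)^2"
    using t0 by (simp add: s_def norm_mult power_mult_distrib)
  moreover have "Re (s * \<beta>) = - t * (cmod \<beta>)^2"
  proof -
    have "s * \<beta> = - complex_of_real t * (\<beta> * cnj \<beta>)" by (simp add: s_def algebra_simps)
    then show ?thesis by (simp add: complex_norm_square[symmetric])
  qed
  ultimately have "0 \<le> t^2 * (cmod \<beta>)^2 * D - 2 * t * (cmod \<beta>)^2" using h[of s] by simp
  then have "0 \<le> t * ((cmod \<beta>)^2 * (t * D - 2))"
    by (simp add: power2_eq_square algebra_simps)
  then have "0 \<le> (cmod \<beta>)^2 * (t * D - 2)" using t0 by (simp add: zero_le_mult_iff)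
  moreover have "t * D - 2 < 0" using tD by simp
  ultimately have "(cmod \<beta>)^2 \<le> 0" by (smt (verit) mult_pos_neg zero_le_power2)
  then show ?thesis by simp
qed

lemma A_selfadj:
  fixes C :: "'b::chilbert_space \<Rightarrow> 'a::chilbert_space"
  assumes bc: "bounded_clinear C"
  shows "cinner (cadjoint C (C u)) w = cinner u (cadjoint C (C w))"
  by (simp add: cadjoint_prop[OF bc] cadjoint_prop2[OF bc])

lemma vec_orth:
  fixes C :: "'b::chilbert_space \<Rightarrow> 'a::chilbert_space"
  assumes bc: "bounded_clinear C"
    and h: "cinner a b = 0" "cinner (cadjoint C (C a)) b = 0"
           "cinner (cadjoint C (C (cadjoint C (C a)))) b = 0"
  shows "cinner (scaleR s (C a), a) (scaleR t (C b), b) = 0"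
    and "cinner (Tmap C (scaleR s (C a), a)) (Tmap C (scaleR t (C b), b)) = 0"
proof -
  let ?A = "\<lambda>z. cadjoint C (C z)"
  have cab: "cinner (C a) (C b) = 0" using h(2) by (simp add: cadjoint_prop[OF bc])
  have aAb: "cinner a (?A b) = 0" using h(2) A_selfadj[OF bc, of a b] by simp
  have AaAb: "cinner (?A a) (?A b) = 0" using h(3) A_selfadj[OF bc, of "?A a" b] by simp
  show "cinner (scaleR s (C a), a) (scaleR t (C b), b) = 0"
    by (simp add: cinner_Pair cinner_scaleR_left cinner_scaleR_right cab h(1))
  show "cinner (Tmap C (scaleR s (C a), a)) (Tmap C (scaleR t (C b), b)) = 0"
    unfolding Tmap_vec[OF bc]
    by (simp add: cinner_Pair cinner_scaleR_left cinner_scaleR_right cinner_add_left cinner_add_right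
        cab h(1) h(2) aAb AaAb)
qed

lemma not_AM:
  fixes C :: "'b::chilbert_space \<Rightarrow> 'a::chilbert_space"
  assumes bc: "bounded_clinear C" and ct: "contraction C" and nf: "\<not> finite_rank C"
  shows "\<not> abs_min_attaining (Tmap C)"
proof
  assume am: "abs_min_attaining (Tmap C)"
  define T where "T = Tmap C"
  let ?A = "\<lambda>z. cadjoint C (C z)"
  have Tl: "clinear T" unfolding T_def by (rule Tmap_clinear[OF bc])
  have Tbl: "bounded_linear T" unfolding T_def by (rule Tmap_bounded_linear[OF bc ct])
  have contT: "continuous_on UNIV T" by (rule linear_continuous_on[OF Tbl])
  obtain y :: "nat \<Rightarrow> 'b" where yy: "\<forall>n. norm (y n) = 1 \<and> C (y n) \<noteq> 0 \<and>
     (\<forall>m<n. cinner (y m) (y n) = 0 \<and> cinner (?A (y m)) (y n) = 0 \<and> cinner (?A (?A (y m))) (y n) = 0)"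
    using exists_seq[OF bc nf, of ?A] by blast
  have y: "\<And>n. norm (y n) = 1" "\<And>n. C (y n) \<noteq> 0"
    "\<And>m n. m < n \<Longrightarrow> cinner (y m) (y n) = 0 \<and> cinner (?A (y m)) (y n) = 0 \<and> cinner (?A (?A (y m))) (y n) = 0"
    using yy by auto
  define \<tau> where "\<tau> n = 1 + min ((norm (C (y n)))^2) (1 / (real n + 1))" for n
  have tau1: "1 < \<tau> n" for n using y(2)[of n] by (simp add: \<tau>_def)
  have tau2: "\<tau> n \<le> 1 + (norm (C (y n)))^2" for n by (simp add: \<tau>_def)
  have tau3: "\<tau> n \<le> 1 + 1 / (real n + 1)" for n by (simp add: \<tau>_def)
  have "\<forall>n. \<exists>t. (norm (Tmap C (scaleR t (C (y n)), y n)))^2 = \<tau> n * (norm (scaleR t (C (y n)), y n))^2"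
    using choose_t[OF bc ct y(1) tau1 tau2] by blast
  then obtain t where t: "\<And>n. (norm (Tmap C (scaleR (t n) (C (y n)), y n)))^2 = \<tau> n * (norm (scaleR (t n) (C (y n)), y n))^2"
    by metis
  define v where "v n = (scaleR (t n) (C (y n)), y n)" for n
  have Tv: "(norm (T (v n)))^2 = \<tau> n * (norm (v n))^2" for n unfolding T_def v_def by (rule t)
  have nv: "norm (v n) > 0" for n
  proof -
    have "snd (v n) \<noteq> 0" using y(1)[of n] by (auto simp: v_def)
    then have "v n \<noteq> 0" by auto
    then show ?thesis by simp
  qed
  have orth_lt: "cinner (v m) (v n) = 0 \<and> cinner (T (v m)) (T (v n)) = 0" if "m < n" for m n
    using vec_orth[OF bc, of "y m" "y n"] y(3)[OF that] unfolding v_def T_def by blast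
  have orth: "cinner (v m) (v n) = 0 \<and> cinner (T (v m)) (T (v n)) = 0" if "m \<noteq> n" for m n
  proof (cases "m < n")
    case True then show ?thesis by (rule orth_lt)
  next
    case False
    then have "n < m" using that by simp
    from orth_lt[OF this] show ?thesis by (metis cnj_cinner complex_cnj_zero)
  qed
  have orthw: "cinner u w = 0 \<and> cinner (T u) (T w) = 0" if uw: "u \<in> range v" "w \<in> range v" "u \<noteq> w" for u w
  proof -
    obtain m n where mn: "u = v m" "w = v n" using uw(1,2) by blast
    then have "m \<noteq> n" using uw(3) by auto
    then show ?thesis using orth[of m n] mn by simp
  qed
  define M where "M = closure (cspan (range v))"
  have Mcs: "closed_csubspace M" unfolding M_def
    by (rule closed_csubspace_closure[OF csubspace_cspan])
  have Msub: "csubspace M" and Mcl: "closed M" using Mcs by (auto simp: closed_csubspace_def)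
  have vM: "v n \<in> M" for n unfolding M_def using closure_subset cspan_base[of "v n" "range v"] by blast
  have MZ: "M \<noteq> {0}" using vM[of 0] nv[of 0] by auto
  have key1: "cinner (T x) (T (v n)) = cinner x (scaleC (complex_of_real (\<tau> n)) (v n))" if xM: "x \<in> M" for x n
  proof -
    let ?b = "scaleC (complex_of_real (\<tau> n)) (v n)"
    have onv: "cinner (T w) (T (v n)) = cinner w ?b" if wv: "w \<in> range v" for w
    proof (cases "w = v n")
      case True
      have "cinner (T (v n)) (T (v n)) = complex_of_real (\<tau> n * (norm (v n))^2)"
        unfolding cinner_self Tv ..
      also have "\<dots> = cinner (v n) ?b"
        by (simp add: cinner_self cinner_scaleC_right)
      finally show ?thesis using True by simp
    next
      case False
      then have "cinner w (v n) = 0 \<and> cinner (T w) (T (v n)) = 0"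
        using orthw[OF wv, of "v n"] by blast
      then show ?thesis by (simp add: cinner_scaleC_right)
    qed
    have sub: "cspan (range v) \<subseteq> {x. cinner (T x) (T (v n)) = cinner x ?b}"
    proof
      fix x assume "x \<in> cspan (range v)"
      then have "cinner (T x) (T (v n)) = cinner x ?b"
        using linear_orth_cspan[OF Tl onv] by blast
      then show "x \<in> {x. cinner (T x) (T (v n)) = cinner x ?b}" by simp
    qed
    have cl: "closed {x. cinner (T x) (T (v n)) = cinner x ?b}"
      by (rule closed_Collect_eq[OF continuous_on_cinner[OF contT continuous_on_const]
           continuous_on_cinner[OF continuous_on_id continuous_on_const]])
    have "M \<subseteq> {x. cinner (T x) (T (v n)) = cinner x ?b}"
      unfolding M_def using closure_minimal[OF sub cl] .
    then show ?thesis using xM by blast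
  qed
  have key2: "(norm x)^2 \<le> (norm (T x))^2" if "x \<in> M" for x
  proof -
    have "cspan (range v) \<subseteq> {x. (norm x)^2 \<le> (norm (T x))^2}"
    proof
      fix x assume "x \<in> cspan (range v)"
      then obtain F c where x: "x = sum (\<lambda>w. scaleC (c w) w) F" "finite F" "F \<subseteq> range v"
        unfolding cspan_def by blast
      have Tx: "T x = sum (\<lambda>w. scaleC (c w) (T w)) F"
        using Tl by (simp add: x clinear_sum clinear_scaleC)
      have o0: "cinner u w = 0 \<and> cinner (T u) (T w) = 0" if "u \<in> F" "w \<in> F" "u \<noteq> w" for u w
        using orthw[of u w] x(3) that by blast
      have o1: "cinner (scaleC (c u) u) (scaleC (c w) w) = 0" if "u \<in> F" "w \<in> F" "u \<noteq> w" for u w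
        using o0[OF that] by (simp add: cinner_scaleC_left cinner_scaleC_right)
      have o2: "cinner (scaleC (c u) (T u)) (scaleC (c w) (T w)) = 0" if "u \<in> F" "w \<in> F" "u \<noteq> w" for u w
        using o0[OF that] by (simp add: cinner_scaleC_left cinner_scaleC_right)
      have "(norm x)^2 = (\<Sum>w\<in>F. (norm (scaleC (c w) w))^2)"
        unfolding x(1) using x(2) o1 by (rule norm_sum_orth)
      also have "\<dots> \<le> (\<Sum>w\<in>F. (norm (scaleC (c w) (T w)))^2)"
      proof (intro sum_mono)
        fix w assume "w \<in> F"
        then obtain n where w: "w = v n" using x(3) by blast
        have "(norm w)^2 \<le> (norm (T w))^2" using Tv[of n] tau1[of n] w
          by (simp add: mult_le_cancel_right1)
        then show "(norm (scaleC (c w) w))^2 \<le> (norm (scaleC (c w) (T w)))^2"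
          by (simp add: norm_scaleC power_mult_distrib mult_left_mono)
      qed
      also have "\<dots> = (norm (T x))^2"
        unfolding Tx using x(2) o2 by (rule norm_sum_orth[symmetric])
      finally show "x \<in> {x. (norm x)^2 \<le> (norm (T x))^2}" by simp
    qed
    moreover have "closed {x. (norm x)^2 \<le> (norm (T x))^2}"
      by (rule closed_Collect_le[OF continuous_on_power[OF continuous_on_norm[OF continuous_on_id]]
          continuous_on_power[OF continuous_on_norm[OF contT]]])
    ultimately have "M \<subseteq> {x. (norm x)^2 \<le> (norm (T x))^2}"
      unfolding M_def by (rule closure_minimal)
    then show ?thesis using that by blast
  qed
  have Madd: "a + b \<in> M" if "a \<in> M" "b \<in> M" for a b using Msub that by (simp add: csubspace_def)
  have Msc: "scaleC c a \<in> M" if "a \<in> M" for a c using Msub that by (simp add: csubspace_def)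
  have key3: "cinner (T x) (T z) = cinner x z" if x: "x \<in> M" "(norm (T x))^2 = (norm x)^2" and z: "z \<in> M" for x z
  proof -
    define \<beta> where "\<beta> = cinner (T x) (T z) - cinner x z"
    have D: "(norm (T z))^2 - (norm z)^2 \<ge> 0" using key2[OF z] by simp
    have "0 \<le> (cmod s)^2 * ((norm (T z))^2 - (norm z)^2) + 2 * Re (s * \<beta>)" for s
    proof -
      have "(norm (x + scaleC s z))^2 \<le> (norm (T (x + scaleC s z)))^2"
        using key2 Madd Msc x z by blast
      moreover have "T (x + scaleC s z) = T x + scaleC s (T z)"
        using Tl by (simp add: clinear_add clinear_scaleC)
      ultimately have "(norm (x + scaleC s z))^2 \<le> (norm (T x + scaleC s (T z)))^2" by simp
      then show ?thesis
        using x(2) by (simp add: norm_add_sq norm_scaleC power_mult_distrib cinner_scaleC_right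
            \<beta>_def algebra_simps)
    qed
    then have "\<beta> = 0" using quad_zero[OF D] by blast
    then show ?thesis by (simp add: \<beta>_def)
  qed
  have key4: "x = 0" if x: "x \<in> M" "norm (T x) = norm x" for x
  proof -
    have "cinner x (v n) = 0" for n
    proof -
      have "cinner x (v n) = cinner (T x) (T (v n))" using key3[OF x(1) _ vM[of n]] x(2) by simp
      also have "\<dots> = complex_of_real (\<tau> n) * cinner x (v n)"
        using key1[OF x(1)] by (simp add: cinner_scaleC_right)
      finally have "(complex_of_real (\<tau> n) - 1) * cinner x (v n) = 0" by (simp add: algebra_simps)
      moreover have "complex_of_real (\<tau> n) - 1 \<noteq> 0" using tau1[of n]
        by (metis eq_iff_diff_eq_0 of_real_1 of_real_eq_iff order_less_irrefl)
      ultimately show ?thesis by simp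
    qed
    then have "cinner w x = 0" if wr: "w \<in> range v" for w
    proof -
      obtain n where "w = v n" using wr by blast
      then show ?thesis using \<open>\<And>n. cinner x (v n) = 0\<close>[of n] cinner_commute[of w x] by simp
    qed
    then have "cspan (range v) \<subseteq> {w. cinner w x = 0}" using orth_cspan by blast
    moreover have "closed {w. cinner w x = 0}"
      by (rule closed_Collect_eq[OF continuous_on_cinner[OF continuous_on_id continuous_on_const]
           continuous_on_const])
    ultimately have "M \<subseteq> {w. cinner w x = 0}" unfolding M_def by (rule closure_minimal)
    then have "cinner x x = 0" using x(1) by blast
    then show ?thesis by (simp add: cinner_eq_zero_iff)
  qed
  define S where "S = {norm (T x) |x. x \<in> M \<and> norm x = 1}"
  have Slow: "1 \<le> s" if "s \<in> S" for s
  proof -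
    from that obtain x where "x \<in> M" "norm x = 1" "s = norm (T x)" by (auto simp: S_def)
    moreover have "1 \<le> (norm (T x))^2" using key2[of x] calculation by simp
    ultimately show ?thesis using power2_le_imp_le[of 1 "norm (T x)"] by simp
  qed
  have Sel: "sqrt (\<tau> n) \<in> S" for n
  proof -
    define u where "u = scaleC (complex_of_real (1 / norm (v n))) (v n)"
    have "u \<in> M" unfolding u_def by (rule Msc[OF vM])
    moreover have "norm u = 1" using nv[of n] by (simp add: u_def norm_scaleC norm_divide)
    moreover have "norm (T u) = sqrt (\<tau> n)"
    proof -
      have "norm (T u) = norm (T (v n)) / norm (v n)"
        using Tl nv[of n] by (simp add: u_def clinear_scaleC norm_scaleC norm_divide)
      also have "norm (T (v n)) = sqrt (\<tau> n) * norm (v n)"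
        using Tv[of n] tau1[of n] by (metis norm_ge_zero real_sqrt_abs real_sqrt_mult abs_of_nonneg
            real_sqrt_pow2_iff power2_eq_square real_sqrt_mult_self)
      finally show ?thesis using nv[of n] by simp
    qed
    ultimately show ?thesis unfolding S_def by (metis (mono_tags, lifting) mem_Collect_eq)
  qed
  have lim: "(\<lambda>n. sqrt (\<tau> n)) \<longlonglongrightarrow> 1"
  proof -
    have "(\<lambda>n. \<tau> n) \<longlonglongrightarrow> 1"
    proof (rule real_tendsto_sandwich[of "\<lambda>n. 1" _ _ "\<lambda>n. 1 + 1 / (real n + 1)"])
      show "\<forall>\<^sub>F n in sequentially. 1 \<le> \<tau> n" using tau1 by (simp add: less_imp_le)
      show "\<forall>\<^sub>F n in sequentially. \<tau> n \<le> 1 + 1 / (real n + 1)" using tau3 by simp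
      show "(\<lambda>n. 1::real) \<longlonglongrightarrow> 1" by simp
      show "(\<lambda>n. 1 + 1 / (real n + 1)) \<longlonglongrightarrow> 1"
        using tendsto_add[OF tendsto_const lim_inv_plus1, of 1] by simp
    qed
    then show ?thesis using tendsto_real_sqrt by fastforce
  qed
  have Sne: "S \<noteq> {}" using Sel by blast
  have infS: "Inf S = 1"
  proof (rule antisym)
    show "1 \<le> Inf S" using Sne Slow by (intro cInf_greatest) auto
    have "Inf S \<le> sqrt (\<tau> n)" for n using Sel Slow by (intro cInf_lower) (auto intro!: bdd_belowI)
    then show "Inf S \<le> 1" using lim by (intro LIMSEQ_le_const) auto
  qed
  have "min_attaining_on M T" using am Mcs MZ unfolding abs_min_attaining_def T_def by blast
  then obtain x where x: "x \<in> M" "norm x = 1" "norm (T x) = min_modulus_on M T"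
    unfolding min_attaining_on_def by blast
  have "min_modulus_on M T = 1" using infS by (simp add: min_modulus_on_def S_def)
  then have "norm (T x) = norm x" using x by simp
  then have "x = 0" using key4 x(1) by blast
  then show False using x(2) by simp
qed

lemma orth_extend:
  assumes E: "finite E" "orthonormal E" and r: "w - proj E w \<noteq> 0"
  defines "e' \<equiv> scaleC (complex_of_real (1 / norm (w - proj E w))) (w - proj E w)"
  shows "orthonormal (insert e' E)" "e' \<notin> E"
proof -
  let ?r = "w - proj E w"
  have ne': "norm e' = 1" using r by (simp add: e'_def norm_scaleC norm_divide)
  have orth: "cinner e e' = 0" if "e \<in> E" for e
    using cinner_diff_proj[OF E that, of w] by (simp add: e'_def cinner_scaleC_right)
  have orth2: "cinner e' e = 0" if "e \<in> E" for e
    using orth[OF that] cinner_commute[of e' e] by simp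
  show "e' \<notin> E" using orth ne' cinner_self_one[OF ne'] by force
  show "orthonormal (insert e' E)"
    using E(2) ne' orth orth2 unfolding orthonormal_def by auto
qed

lemma csubspace_cspan_sub: "csubspace W \<Longrightarrow> E \<subseteq> W \<Longrightarrow> cspan E \<subseteq> W"
  by (rule cspan_minimal)

lemma fin_dim_W:
  fixes K :: "'c::complex_inner \<Rightarrow> 'c"
  assumes Kl: "clinear K" and G: "finite G" and rK: "range K \<subseteq> cspan G"
    and W: "csubspace W" and inj: "\<And>w. w \<in> W \<Longrightarrow> K w = 0 \<Longrightarrow> w = 0"
  shows "\<exists>E. finite E \<and> orthonormal E \<and> E \<subseteq> W \<and> W \<subseteq> cspan E"
proof -
  have Wd: "a - b \<in> W" if "a \<in> W" "b \<in> W" for a b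
    using W that unfolding csubspace_eq by (rule module.subspace_diff[OF cmodule])
  have bound: "card E < card G + 1" if E: "finite E" "orthonormal E" "E \<subseteq> W" for E
  proof -
    have injE: "inj_on K E"
    proof (rule inj_onI)
      fix a b assume ab: "a \<in> E" "b \<in> E" "K a = K b"
      then have "K (a - b) = 0" by (simp add: clinear_diff[OF Kl])
      moreover have "a - b \<in> W" using ab E(3) Wd by blast
      ultimately show "a = b" using inj by fastforce
    qed
    have indep: "\<not> module.dependent scaleC (K ` E)"
    proof
      assume "module.dependent scaleC (K ` E)"
      then obtain t u where t: "finite t" "t \<subseteq> K ` E" "(\<Sum>v\<in>t. scaleC (u v) v) = 0"
        and nz: "\<exists>v\<in>t. u v \<noteq> 0"
        unfolding module.dependent_explicit[OF cmodule] by blast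
      define E' where "E' = {e\<in>E. K e \<in> t}"
      have tE: "t = K ` E'" using t(2) by (auto simp: E'_def)
      have E'sub: "E' \<subseteq> E" by (auto simp: E'_def)
      have fE': "finite E'" using E(1) E'sub finite_subset by blast
      have oE': "orthonormal E'" using E(2) E'sub by (auto simp: orthonormal_def)
      have injE': "inj_on K E'" using injE E'sub inj_on_subset by blast
      define s where "s = (\<Sum>e\<in>E'. scaleC (u (K e)) e)"
      have "K s = (\<Sum>e\<in>E'. scaleC (u (K e)) (K e))"
        by (simp add: s_def clinear_sum[OF Kl] clinear_scaleC[OF Kl])
      also have "\<dots> = (\<Sum>v\<in>t. scaleC (u v) v)"
        unfolding tE by (simp add: sum.reindex[OF injE'])
      finally have Ks: "K s = 0" using t(3) by simp
      have "s \<in> cspan E'" unfolding s_def by (intro cspan_sum cspan_scale cspan_base)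
      moreover have "cspan E' \<subseteq> W" using W E(3) E'sub by (intro cspan_minimal) auto
      ultimately have "s = 0" using inj Ks by blast
      have "u (K e) = 0" if "e \<in> E'" for e
        using orthonormal_sum_cinner[OF fE' oE' that, of "\<lambda>e. u (K e)"] \<open>s = 0\<close>
        by (simp add: s_def)
      then show False using nz tE by auto
    qed
    have "K ` E \<subseteq> module.span scaleC G" using rK by (auto simp: cspan_eq)
    then have "card (K ` E) \<le> card G"
      using vector_space.independent_span_bound[OF cvs G indep] by blast
    then show ?thesis using card_image[OF injE] by simp
  qed
  define P where "P E \<longleftrightarrow> finite E \<and> orthonormal E \<and> E \<subseteq> W" for E
  have P0: "P {}" by (simp add: P_def orthonormal_def)
  obtain E where PE: "P E" and Emax: "\<And>E'. P E' \<Longrightarrow> card E' \<le> card E"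
    using ex_has_greatest_nat[of P "{}" card "card G + 1"] P0 bound unfolding P_def by blast
  have E: "finite E" "orthonormal E" "E \<subseteq> W" using PE by (auto simp: P_def)
  have "W \<subseteq> cspan E"
  proof
    fix w assume w: "w \<in> W"
    show "w \<in> cspan E"
    proof (rule ccontr)
      assume nw: "w \<notin> cspan E"
      let ?r = "w - proj E w"
      define e' where "e' = scaleC (complex_of_real (1 / norm ?r)) ?r"
      have r0: "?r \<noteq> 0" using nw proj_in_cspan[of E w] by auto
      have on: "orthonormal (insert e' E)" and ne: "e' \<notin> E"
        using orth_extend[OF E(1,2) r0] unfolding e'_def by auto
      have "proj E w \<in> W" using cspan_minimal[OF E(3) W] proj_in_cspan[of E w] by blast
      then have "?r \<in> W" using Wd w by blast
      then have "e' \<in> W" using W unfolding e'_def csubspace_def by blast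
      then have "P (insert e' E)" using on E by (simp add: P_def)
      then have "card (insert e' E) \<le> card E" by (rule Emax)
      then show False using ne E(1) by simp
    qed
  qed
  then show ?thesis using E by blast
qed

lemma finite_dim_min:
  fixes f :: "'a::chilbert_space \<Rightarrow> real"
  assumes E: "finite E" "orthonormal E" and WE: "W \<subseteq> cspan E" and clW: "closed W"
    and ex: "\<exists>w\<in>W. norm w = 1" and cf: "continuous_on UNIV f" and f0: "\<And>u. f u \<ge> 0"
  shows "\<exists>w\<in>W. norm w = 1 \<and> (\<forall>u\<in>W. norm u = 1 \<longrightarrow> f w \<le> f u)"
proof -
  define R where "R = {f u | u. u \<in> W \<and> norm u = 1}"
  define \<mu> where "\<mu> = Inf R"
  have Rne: "R \<noteq> {}" using ex by (auto simp: R_def)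
  have bdd: "bdd_below R" using f0 by (auto simp: R_def intro!: bdd_belowI[of _ 0])
  have mule: "\<mu> \<le> f u" if "u \<in> W" "norm u = 1" for u
    unfolding \<mu>_def using that bdd by (intro cInf_lower) (auto simp: R_def)
  have "\<forall>k. \<exists>u. u \<in> W \<and> norm u = 1 \<and> f u < \<mu> + 1 / (real k + 1)"
  proof
    fix k :: nat
    have "Inf R < \<mu> + 1 / (real k + 1)" unfolding \<mu>_def by (simp add: add_pos_nonneg)
    then obtain r where "r \<in> R" "r < \<mu> + 1 / (real k + 1)" using cInf_lessD[OF Rne] by blast
    then show "\<exists>u. u \<in> W \<and> norm u = 1 \<and> f u < \<mu> + 1 / (real k + 1)" by (auto simp: R_def)
  qed
  then obtain u where u: "\<And>k. u k \<in> W" "\<And>k. norm (u k) = 1" "\<And>k. f (u k) < \<mu> + 1 / (real k + 1)"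
    by metis
  have cb: "cmod (cinner e (u k)) \<le> 1" if "e \<in> E" for e k
  proof -
    have "norm e = 1" using E(2) that by (simp add: orthonormal_def)
    then show ?thesis using cauchy_schwarz[of e "u k"] u(2)[of k] by simp
  qed
  obtain r where r: "strict_mono r" "\<forall>e\<in>E. convergent (\<lambda>k. cinner e (u (r k)))"
    using subseq_finite_bounded[OF E(1), of "\<lambda>k e. cinner e (u k)" 1] cb by blast
  define l where "l e = lim (\<lambda>k. cinner e (u (r k)))" for e
  have lconv: "(\<lambda>k. cinner e (u (r k))) \<longlonglongrightarrow> l e" if "e \<in> E" for e
    using r(2) that by (simp add: l_def convergent_LIMSEQ_iff)
  define w where "w = (\<Sum>e\<in>E. scaleC (l e) e)"
  have ueq: "u (r k) = (\<Sum>e\<in>E. scaleC (cinner e (u (r k))) e)" for k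
    using proj_cspan_id[OF E, of "u (r k)"] WE u(1)[of "r k"] by (auto simp: proj_def)
  have conv: "(\<lambda>k. u (r k)) \<longlonglongrightarrow> w"
    unfolding w_def
    by (subst ueq) (intro tendsto_sum tendsto_scaleC lconv tendsto_const)
  have wW: "w \<in> W" using closed_sequentially[OF clW _ conv] u(1) by blast
  have "(\<lambda>k. norm (u (r k))) \<longlonglongrightarrow> norm w" by (intro tendsto_intros conv)
  then have nw: "norm w = 1" using u(2) by (simp add: LIMSEQ_const_iff)
  have fconv: "(\<lambda>k. f (u (r k))) \<longlonglongrightarrow> f w"
    using cf conv by (metis continuous_on_tendsto_compose UNIV_I eventually_sequentially always_eventually)
  have bnd: "f (u (r k)) \<le> \<mu> + 1 / (real k + 1)" for k
  proof -
    have "k \<le> r k" using r(1) by (rule seq_suble)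
    then have "1 / (real (r k) + 1) \<le> 1 / (real k + 1)" by (intro divide_left_mono) auto
    then show ?thesis using u(3)[of "r k"] by simp
  qed
  have "(\<lambda>k. \<mu> + 1 / (real k + 1)) \<longlonglongrightarrow> \<mu> + 0" by (intro tendsto_intros lim_inv_plus1)
  then have "f w \<le> \<mu>" using fconv bnd by (intro LIMSEQ_le[OF fconv]) auto
  then show ?thesis using wW nw mule by (intro bexI[of _ w]) force+
qed

lemma clinear_inl: "clinear (\<lambda>f::'a::complex_vector. (f, 0::'b::complex_vector))"
  by (simp add: clinear_def scaleC_Pair)
lemma clinear_inr: "clinear (\<lambda>g::'b::complex_vector. (0::'a::complex_vector, g))"
  by (simp add: clinear_def scaleC_Pair)

lemma finite_rank_K:
  fixes C :: "'b::chilbert_space \<Rightarrow> 'a::chilbert_space"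
  assumes bc: "bounded_clinear C" and ct: "contraction C" and fr: "finite_rank C"
  shows "\<exists>G. finite G \<and> range (Kmap C) \<subseteq> cspan G"
proof -
  obtain F0 where F0: "finite F0" "range C \<subseteq> cspan F0" using fr by (auto simp: finite_rank_def)
  obtain E0 where E0: "finite E0" "orthonormal E0" "F0 \<subseteq> cspan E0"
    using gram_schmidt[OF F0(1)] by blast
  have rC: "range C \<subseteq> cspan E0" using F0(2) cspan_subset_trans[OF E0(3)] by blast
  have Cl: "clinear C" using bc by (simp add: bounded_clinear_def)
  have Cal: "clinear (cadjoint C)"
    using cadjoint_bounded_clinear[OF bc ct] by (simp add: bounded_clinear_def)
  have adj_in: "cadjoint C x \<in> cspan (cadjoint C ` E0)" for x
  proof -
    have "cadjoint C (x - proj E0 x) = 0"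
    proof (rule cinner_ext)
      fix z
      have "C z \<in> cspan E0" using rC by blast
      then have "cinner (C z) (x - proj E0 x) = 0" by (rule diff_proj_orth_cspan[OF E0(1,2)])
      then show "cinner (cadjoint C (x - proj E0 x)) z = cinner 0 z"
        by (simp add: cadjoint_prop[OF bc]) (metis cnj_cinner complex_cnj_zero)
    qed
    then have "cadjoint C x = cadjoint C (proj E0 x)" by (simp add: clinear_diff[OF Cal])
    then show ?thesis using clinear_cspan_image[OF Cal proj_in_cspan] by metis
  qed
  define G where "G = (\<lambda>f. (f, 0::'b)) ` F0 \<union> (\<lambda>g. (0::'a, g)) ` (cadjoint C ` E0)"
  have "finite G" using F0(1) E0(1) by (simp add: G_def)
  moreover have "range (Kmap C) \<subseteq> cspan G"
  proof
    fix k assume "k \<in> range (Kmap C)"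
    then obtain x y where k: "k = (C y, cadjoint C x)" by (auto simp: Kmap_def)
    have "(C y, 0::'b) \<in> cspan ((\<lambda>f. (f, 0::'b)) ` F0)"
      using clinear_cspan_image[OF clinear_inl, of "C y" F0] F0(2) by blast
    then have 1: "(C y, 0::'b) \<in> cspan G" using cspan_mono[of _ G] by (auto simp: G_def)
    have "(0::'a, cadjoint C x) \<in> cspan ((\<lambda>g. (0::'a, g)) ` (cadjoint C ` E0))"
      using clinear_cspan_image[OF clinear_inr adj_in] by blast
    then have 2: "(0::'a, cadjoint C x) \<in> cspan G" using cspan_mono[of _ G] by (auto simp: G_def)
    have "k = (C y, 0) + (0, cadjoint C x)" by (simp add: k)
    then show "k \<in> cspan G" using cspan_add[OF 1 2] by simp
  qed
  ultimately show ?thesis by blast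
qed

lemma min_attaining_from_min:
  assumes "x \<in> M" "norm x = 1" "\<And>u. u \<in> M \<Longrightarrow> norm u = 1 \<Longrightarrow> norm (S x) \<le> norm (S u)"
  shows "min_attaining_on M S"
proof -
  have "min_modulus_on M S = norm (S x)"
    unfolding min_modulus_on_def using assms by (intro cInf_eq_minimum) auto
  then show ?thesis unfolding min_attaining_on_def using assms(1,2) by auto
qed

lemma AM_if_finite_rank:
  fixes C :: "'b::chilbert_space \<Rightarrow> 'a::chilbert_space"
  assumes bc: "bounded_clinear C" and ct: "contraction C" and fr: "finite_rank C"
  shows "abs_min_attaining (Tmap C)"
  unfolding abs_min_attaining_def
proof (intro allI impI, elim conjE)
  fix M :: "('a \<times> 'b) set"
  assume Mcs: "closed_csubspace M" and MZ: "M \<noteq> {0}"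
  define T where "T = Tmap C"
  define K where "K = Kmap C"
  have Kl: "clinear K" unfolding K_def by (rule Kmap_clinear[OF bc])
  have Tl: "clinear T" unfolding T_def by (rule Tmap_clinear[OF bc])
  have contK: "continuous_on UNIV K" unfolding K_def
    by (rule linear_continuous_on[OF Kmap_bounded_linear[OF bc ct]])
  have contT: "continuous_on UNIV T" unfolding T_def
    by (rule linear_continuous_on[OF Tmap_bounded_linear[OF bc ct]])
  have TK: "T u = u + K u" for u unfolding T_def K_def by (rule Tmap_Kmap)
  have sa: "cinner (K u) v = cinner u (K v)" for u v unfolding K_def by (rule Kmap_selfadj[OF bc])
  obtain G where G: "finite G" "range K \<subseteq> cspan G"
    using finite_rank_K[OF bc ct fr] unfolding K_def by blast
  have Msub: "csubspace M" and Mcl: "closed M" using Mcs by (auto simp: closed_csubspace_def)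
  have M0: "0 \<in> M" and Madd: "\<And>a b. a \<in> M \<Longrightarrow> b \<in> M \<Longrightarrow> a + b \<in> M"
    and Msc: "\<And>c a. a \<in> M \<Longrightarrow> scaleC c a \<in> M"
    using Msub by (auto simp: csubspace_def)
  have Mdiff: "a - b \<in> M" if "a \<in> M" "b \<in> M" for a b
    using Msub that unfolding csubspace_eq by (rule module.subspace_diff[OF cmodule])
  define N where "N = M \<inter> {u. K u = 0}"
  have Ncs: "closed_csubspace N"
  proof -
    have "closed {u. K u = 0}" by (rule closed_Collect_eq[OF contK continuous_on_const])
    then have "closed N" using Mcl by (simp add: N_def closed_Int)
    moreover have "csubspace N" using Msub
      by (auto simp: N_def csubspace_def clinear_add[OF Kl] clinear_scaleC[OF Kl] clinear_zero[OF Kl])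
    ultimately show ?thesis by (simp add: closed_csubspace_def)
  qed
  define W where "W = M \<inter> (\<Inter>n\<in>N. {w. cinner n w = 0})"
  have Wcl: "closed W"
    unfolding W_def
    by (intro closed_Int Mcl closed_INT ballI closed_Collect_eq
        continuous_on_cinner[OF continuous_on_const continuous_on_id] continuous_on_const)
  have Wsub: "csubspace W"
    using Msub by (auto simp: W_def csubspace_def cinner_add_right cinner_scaleC_right)
  have WM: "W \<subseteq> M" by (auto simp: W_def)
  have NM: "N \<subseteq> M" by (auto simp: N_def)
  have decomp: "\<exists>n\<in>N. \<exists>w\<in>W. u = n + w" if "u \<in> M" for u
  proof -
    obtain p where p: "p \<in> N" "\<And>n. n \<in> N \<Longrightarrow> cinner n (u - p) = 0"
      using projection_exists[OF Ncs, of u] by blast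
    have "p \<in> M" using p(1) NM by blast
    then have "u - p \<in> M" using Mdiff[OF that] by blast
    then have "u - p \<in> W" using p(2) unfolding W_def by blast
    then show ?thesis using p(1) by (intro bexI[of _ p] bexI[of _ "u - p"]) auto
  qed
  have Tdec: "(norm (T (n + w)))^2 = (norm n)^2 + (norm (T w))^2 \<and> (norm (n + w))^2 = (norm n)^2 + (norm w)^2"
    if nw: "n \<in> N" "w \<in> W" for n w
  proof -
    have Kn: "K n = 0" using nw(1) by (simp add: N_def)
    have nw0: "cinner n w = 0" using nw by (auto simp: W_def)
    have "T (n + w) = n + T w" using Kn by (simp add: TK clinear_add[OF Kl] algebra_simps)
    moreover have "cinner n (T w) = 0"
      using nw0 Kn sa[of n w] by (simp add: TK cinner_add_right)
    ultimately show ?thesis using nw0 by (simp add: pythagoras)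
  qed
  have Winj: "w = 0" if "w \<in> W" "K w = 0" for w
  proof -
    have "w \<in> N" using that WM by (auto simp: N_def)
    then have "cinner w w = 0" using that(1) by (auto simp: W_def)
    then show ?thesis by (simp add: cinner_eq_zero_iff)
  qed
  obtain E where E: "finite E" "orthonormal E" "E \<subseteq> W" "W \<subseteq> cspan E"
    using fin_dim_W[OF Kl G Wsub Winj] by metis
  have unit_of: "\<exists>x\<in>S. norm x = 1" if SS: "csubspace S" "S \<noteq> {0}" for S :: "('a \<times> 'b) set"
  proof -
    have "\<exists>s. s \<in> S \<and> s \<noteq> 0" using SS unfolding csubspace_def by blast
    then obtain s where s: "s \<in> S" "s \<noteq> 0" by blast
    then have "scaleC (complex_of_real (1 / norm s)) s \<in> S" using SS(1) by (simp add: csubspace_def)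
    moreover have "norm (scaleC (complex_of_real (1 / norm s)) s) = 1"
      using s(2) by (simp add: norm_scaleC norm_divide)
    ultimately show ?thesis by blast
  qed
  have Nsub: "csubspace N" using Ncs by (simp add: closed_csubspace_def)
  have Tn: "T n = n" if "n \<in> N" for n using that by (simp add: TK N_def)
  have unitdec: "\<exists>n w. n \<in> N \<and> w \<in> W \<and> u = n + w \<and> (norm (T u))^2 = (norm n)^2 + (norm (T w))^2
                  \<and> 1 = (norm n)^2 + (norm w)^2" if "u \<in> M" "norm u = 1" for u
    using decomp[OF that(1)] Tdec that(2) by fastforce
  show "min_attaining_on M T"
  proof (cases "W = {0}")
    case True
    have "N \<noteq> {0}"
    proof
      assume N0: "N = {0}"
      have "u = 0" if "u \<in> M" for u
        using decomp[OF that] N0 True by auto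
      then have "M = {0}" using M0 by blast
      then show False using MZ by blast
    qed
    then obtain n1 where n1: "n1 \<in> N" "norm n1 = 1" using unit_of[OF Nsub] by blast
    show ?thesis
    proof (rule min_attaining_from_min[of n1])
      show "n1 \<in> M" using n1 NM by blast
      show "norm n1 = 1" by (rule n1(2))
      fix u assume u: "u \<in> M" "norm u = 1"
      obtain n w where nw: "n \<in> N" "w \<in> W" "u = n + w" using decomp[OF u(1)] by blast
      then have "w = 0" using True by blast
      then show "norm (T n1) \<le> norm (T u)" using Tn n1 nw u by simp
    qed
  next
    case False
    then obtain w1 where w1: "w1 \<in> W" "norm w1 = 1" using unit_of[OF Wsub] by blast
    obtain ws where ws: "ws \<in> W" "norm ws = 1" "\<And>u. u \<in> W \<Longrightarrow> norm u = 1 \<Longrightarrow> norm (T ws) \<le> norm (T u)"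
      using finite_dim_min[OF E(1,2) E(4) Wcl _ continuous_on_norm[OF contT], of] w1 by force
    define \<mu> where "\<mu> = norm (T ws)"
    have mu0: "\<mu> \<ge> 0" by (simp add: \<mu>_def)
    have Wlow: "\<mu> * norm w \<le> norm (T w)" if "w \<in> W" for w
    proof (cases "w = 0")
      case True then show ?thesis by (simp add: clinear_zero[OF Tl])
    next
      case False
      define w' where "w' = scaleC (complex_of_real (1 / norm w)) w"
      have "w' \<in> W" using that Wsub by (simp add: w'_def csubspace_def)
      moreover have "norm w' = 1" using False by (simp add: w'_def norm_scaleC norm_divide)
      ultimately have "\<mu> \<le> norm (T w')" using ws(3) by (simp add: \<mu>_def)
      also have "norm (T w') = norm (T w) / norm w"
        using False by (simp add: w'_def clinear_scaleC[OF Tl] norm_scaleC norm_divide)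
      finally show ?thesis using False by (simp add: pos_le_divide_eq)
    qed
    have Wlow2: "\<mu>^2 * (norm w)^2 \<le> (norm (T w))^2" if "w \<in> W" for w
      using Wlow[OF that] mu0 by (metis power_mono power_mult_distrib mult_nonneg_nonneg norm_ge_zero)
    show ?thesis
    proof (cases "N = {0} \<or> \<mu> \<le> 1")
      case True
      show ?thesis
      proof (rule min_attaining_from_min[of ws])
        show "ws \<in> M" using ws WM by blast
        show "norm ws = 1" by (rule ws(2))
        fix u assume u: "u \<in> M" "norm u = 1"
        obtain n w where nw: "n \<in> N" "w \<in> W" "u = n + w"
          "(norm (T u))^2 = (norm n)^2 + (norm (T w))^2" "1 = (norm n)^2 + (norm w)^2"
          using unitdec[OF u] by blast
        have "\<mu>^2 \<le> (norm (T u))^2"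
        proof (cases "N = {0}")
          case True
          then have "n = 0" using nw(1) by blast
          then show ?thesis using nw Wlow2[OF nw(2)] by simp
        next
          case False
          then have "\<mu> \<le> 1" using \<open>N = {0} \<or> \<mu> \<le> 1\<close> by blast
          then have "\<mu>^2 \<le> 1" using mu0 by (simp add: power_le_one)
          then have "\<mu>^2 * (norm n)^2 \<le> (norm n)^2" by (simp add: mult_left_le_one_le)
          moreover have "\<mu>^2 = \<mu>^2 * (norm n)^2 + \<mu>^2 * (norm w)^2"
            using nw(5) by (metis distrib_left mult.right_neutral)
          ultimately show ?thesis using nw(4) Wlow2[OF nw(2)] by linarith
        qed
        then have "\<mu> \<le> norm (T u)" using power2_le_imp_le[of \<mu> "norm (T u)"] by simp
        then show "norm (T ws) \<le> norm (T u)" by (simp add: \<mu>_def)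
      qed
    next
      case False
      then have "N \<noteq> {0}" and mu1: "1 < \<mu>" by auto
      then obtain n1 where n1: "n1 \<in> N" "norm n1 = 1" using unit_of[OF Nsub] by blast
      show ?thesis
      proof (rule min_attaining_from_min[of n1])
        show "n1 \<in> M" using n1 NM by blast
        show "norm n1 = 1" by (rule n1(2))
        fix u assume u: "u \<in> M" "norm u = 1"
        obtain n w where nw: "n \<in> N" "w \<in> W" "u = n + w"
          "(norm (T u))^2 = (norm n)^2 + (norm (T w))^2" "1 = (norm n)^2 + (norm w)^2"
          using unitdec[OF u] by blast
        have "1 \<le> \<mu>^2" using mu1 by (simp add: one_le_power)
        then have "(norm w)^2 \<le> \<mu>^2 * (norm w)^2" by (simp add: mult_le_cancel_right1)
        then have "1 \<le> (norm (T u))^2" using nw Wlow2[OF nw(2)] by linarith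
        then have "1 \<le> norm (T u)" using power2_le_imp_le[of 1 "norm (T u)"] by simp
        then show "norm (T n1) \<le> norm (T u)" using Tn[OF n1(1)] n1(2) by simp
      qed
    qed
  qed
qed

theorem corollary4p13:
  fixes C :: "'b::chilbert_space \<Rightarrow> 'a::chilbert_space"
  assumes "separable_space TYPE('a)" and "infinite_dimensional TYPE('a)"
    and "separable_space TYPE('b)" and "infinite_dimensional TYPE('b)"
    and "bounded_clinear C" and "contraction C"
  shows "abs_min_attaining (\<lambda>(x::'a, y::'b). (x + C y, cadjoint C x + y))
         \<longleftrightarrow> finite_rank C"
proof -
  have eq: "(\<lambda>(x::'a, y::'b). (x + C y, cadjoint C x + y)) = Tmap C" by (simp add: Tmap_def)
  show ?thesis unfolding eq using not_AM[OF assms(5,6)] AM_if_finite_rank[OF assms(5,6)] by blast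
qed

end
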